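(* Let $k\ge3$, $P_k(x)=-\left(x+\frac{k-1}{2}\right)\left(x-\frac{k-1}{2}\right)\prod_{i=1}^{k-1}\left(x-\left(i-\frac k2\right)\right)^2$, let $Z_k=(X_k,Y_k)$ with $X_k(x,y)=(1,P_k'(x))$ for $y\ge0$, $Y_k(x,y)=(-1,P_k'(x))$ for $y\le0$, and $\Lambda_k=\{(x,\pm P_k(x)):\frac{1-k}{2}\le x\le\frac{k-1}{2}\}$. Let $\widetilde Z$ be any planar PSVF presenting a $(k-1)$-homoclinic loop, and let $\widetilde\Lambda$ be the set formed by this loop. Then $Z_k$ restricted to $\Lambda_k$ and $\widetilde Z$ restricted to $\widetilde\Lambda$ are $\Sigma$-equivalent.
   Context: A planar PSVF $Z=(X,Y)$ with switching manifold $\Sigma=f^{-1}(0)$ ($f$ smooth, $0$ a regular value) equals the smooth field $X$ on $\Sigma^+=\{f\ge0\}$ and $Y$ on $\Sigma^-=\{f\le0\}$ (for $Z_k$, $f(x,y)=y$). With $Wf=\langle\nabla f,W\rangle$, $W^2f=\langle\nabla(Wf),W\rangle$: crossing (sewing) points are $p\in\Sigma$ with $Xf(p)Yf(p)>0$; sliding region $\{Xf<0<Yf\}$, escaping $\{Yf<0<Xf\}$, with sliding field $Z^T=(Yf\,X-Xf\,Y)/(Yf-Xf)$ there. A point $p\in\Sigma$ is a fold of $X$ if $Xf(p)=0\neq X^2f(p)$, visible if $X^2f(p)>0$; a fold of $Y$ is visible if $Y^2f(p)<0$; a visible-visible two-fold is a visible fold of both. Trajectories follow the Filippov convention: off $\Sigma$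 follow $X$ or $Y$; at crossing points pass from one side to the other; at escaping/sliding points use $Z^T$ backward/forward and any of $X,Y,Z^T$ in the other time direction; at a regular tangency (not invisible for both fields) choose any of $X,Y,Z^T$ backward and forward; a global trajectory is a bi-infinite orientation-preserving concatenation of such local trajectories defined for all $t\in\mathbb{R}$. A $k$-homoclinic loop ($k\ge1$) is a global trajectory presenting $k$ distinct visible-visible two-folds $p_1,\dots,p_k$ such that, after passing through $p_i$, the trajectory reaches $\Sigma$ at $p_{i-1}$ or $p_{i+1}$ ($i=2,\dots,k-1$); for $i=1$ (resp. $i=k$) it reaches $\Sigma$ at a sewing point or at $p_{i+1}$ (resp. $p_{i-1}$). $Z|_\Lambda$ and $\widetilde Z|_{\widetilde\Lambda}$ are $\Sigma$-equivalent if there is an orientation-preserving homeomorphism $h:\Lambda\to\widetilde\Lambda$ sending $\Lambda\cap\Sigma$ onto $\widetilde\Lambda\cap\widetilde\Sigma$, orbits of $X$ in $\Lambda\cap\Sigma^+$ onto orbits of $\widetilde X$ in $\widetilde\Lambda\cap\widetilde\Sigma^+$, orbits of $Y$ in $\Lambda\cap\Sigma^-$ onto orbits of $\widetilde Y$ in $\widetilde\Lambda\cap\widetilde\Sigma^-$, and orbits of $Z^T$ onto orbits of $\widetilde Z^T$. *)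

theory Defs
  imports "HOL-Analysis.Analysis"
begin

type_synonym pt = "real \<times> real"

fun Ck :: "nat \<Rightarrow> ('a::real_normed_vector \<Rightarrow> 'b::real_normed_vector) \<Rightarrow> bool" where
  "Ck 0 g = continuous_on UNIV g"
| "Ck (Suc n) g = (g differentiable_on UNIV \<and>
      (\<forall>v. Ck n (\<lambda>x. frechet_derivative g (at x) v)))"

definition smooth :: "('a::real_normed_vector \<Rightarrow> 'b::real_normed_vector) \<Rightarrow> bool" where
  "smooth g \<longleftrightarrow> (\<forall>n. Ck n g)"

section \<open>Planar piecewise smooth vector fields Z = (X,Y) with switching manifold f^-1(0)\<close>

definition PSVF :: "(pt \<Rightarrow> pt) \<Rightarrow> (pt \<Rightarrow> pt) \<Rightarrow> (pt \<Rightarrow> real) \<Rightarrow> bool" where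
  "PSVF X Y f \<longleftrightarrow> smooth X \<and> smooth Y \<and> smooth f \<and>
     (\<forall>p. f p = 0 \<longrightarrow> frechet_derivative f (at p) \<noteq> (\<lambda>v. 0))"

definition Sig :: "(pt \<Rightarrow> real) \<Rightarrow> pt set" where
  "Sig f = {p. f p = 0}"

definition Splus :: "(pt \<Rightarrow> real) \<Rightarrow> pt set" where
  "Splus f = {p. f p \<ge> 0}"

definition Sminus :: "(pt \<Rightarrow> real) \<Rightarrow> pt set" where
  "Sminus f = {p. f p \<le> 0}"

definition Lie :: "(pt \<Rightarrow> pt) \<Rightarrow> (pt \<Rightarrow> real) \<Rightarrow> pt \<Rightarrow> real" where
  "Lie W f p = frechet_derivative f (at p) (W p)"

definition Lie2 :: "(pt \<Rightarrow> pt) \<Rightarrow> (pt \<Rightarrow> real) \<Rightarrow> pt \<Rightarrow> real" where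
  "Lie2 W f p = frechet_derivative (Lie W f) (at p) (W p)"

definition crossing :: "(pt \<Rightarrow> pt) \<Rightarrow> (pt \<Rightarrow> pt) \<Rightarrow> (pt \<Rightarrow> real) \<Rightarrow> pt \<Rightarrow> bool" where
  "crossing X Y f p \<longleftrightarrow> p \<in> Sig f \<and> Lie X f p * Lie Y f p > 0"

definition slide_esc :: "(pt \<Rightarrow> pt) \<Rightarrow> (pt \<Rightarrow> pt) \<Rightarrow> (pt \<Rightarrow> real) \<Rightarrow> pt set" where
  "slide_esc X Y f = {p \<in> Sig f. (Lie X f p < 0 \<and> 0 < Lie Y f p) \<or> (Lie Y f p < 0 \<and> 0 < Lie X f p)}"

definition ZT :: "(pt \<Rightarrow> pt) \<Rightarrow> (pt \<Rightarrow> pt) \<Rightarrow> (pt \<Rightarrow> real) \<Rightarrow> pt \<Rightarrow> pt" where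
  "ZT X Y f p = (1 / (Lie Y f p - Lie X f p)) *\<^sub>R (Lie Y f p *\<^sub>R X p - Lie X f p *\<^sub>R Y p)"

text \<open>Points of Sigma where the sliding field may be used: sliding/escaping points and
  regular tangencies (where the sliding field formula is still defined).\<close>
definition ZT_dom :: "(pt \<Rightarrow> pt) \<Rightarrow> (pt \<Rightarrow> pt) \<Rightarrow> (pt \<Rightarrow> real) \<Rightarrow> pt set" where
  "ZT_dom X Y f = {p \<in> Sig f. Lie X f p * Lie Y f p \<le> 0 \<and> Lie X f p \<noteq> Lie Y f p}"

definition vv_twofold :: "(pt \<Rightarrow> pt) \<Rightarrow> (pt \<Rightarrow> pt) \<Rightarrow> (pt \<Rightarrow> real) \<Rightarrow> pt \<Rightarrow> bool" where
  "vv_twofold X Y f p \<longleftrightarrow> p \<in> Sig f \<and>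
     Lie X f p = 0 \<and> Lie2 X f p > 0 \<and> Lie Y f p = 0 \<and> Lie2 Y f p < 0"

definition sol_in :: "(pt \<Rightarrow> pt) \<Rightarrow> pt set \<Rightarrow> (real \<Rightarrow> pt) \<Rightarrow> real \<Rightarrow> real \<Rightarrow> bool" where
  "sol_in V S \<gamma> a b \<longleftrightarrow> a \<le> b \<and>
     (\<forall>t\<in>{a..b}. \<gamma> t \<in> S \<and> (\<gamma> has_vector_derivative V (\<gamma> t)) (at t within {a..b}))"

definition local_piece :: "(pt \<Rightarrow> pt) \<Rightarrow> (pt \<Rightarrow> pt) \<Rightarrow> (pt \<Rightarrow> real) \<Rightarrow> (real \<Rightarrow> pt) \<Rightarrow> real \<Rightarrow> real \<Rightarrow> bool" where
  "local_piece X Y f \<gamma> a b \<longleftrightarrow>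
     sol_in X (Splus f) \<gamma> a b \<or> sol_in Y (Sminus f) \<gamma> a b \<or> sol_in (ZT X Y f) (ZT_dom X Y f) \<gamma> a b"

definition global_traj :: "(pt \<Rightarrow> pt) \<Rightarrow> (pt \<Rightarrow> pt) \<Rightarrow> (pt \<Rightarrow> real) \<Rightarrow> (real \<Rightarrow> pt) \<Rightarrow> bool" where
  "global_traj X Y f \<gamma> \<longleftrightarrow>
     (\<forall>t. \<exists>\<epsilon>>0. local_piece X Y f \<gamma> (t - \<epsilon>) t \<and> local_piece X Y f \<gamma> t (t + \<epsilon>))"

text \<open>A k-homoclinic loop (k >= 1): a closed global trajectory which, along one period,
  meets Sigma exactly at a sewing point q, then p_1, ..., p_k, then a sewing point q',
  then p_k, ..., p_1 (and back to q); the p_i are distinct visible-visible two-folds.\<close>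
definition homoclinic_loop ::
  "(pt \<Rightarrow> pt) \<Rightarrow> (pt \<Rightarrow> pt) \<Rightarrow> (pt \<Rightarrow> real) \<Rightarrow> nat \<Rightarrow> (real \<Rightarrow> pt) \<Rightarrow> (nat \<Rightarrow> pt) \<Rightarrow> bool" where
  "homoclinic_loop X Y f k \<gamma> p \<longleftrightarrow> k \<ge> 1 \<and>
     global_traj X Y f \<gamma> \<and>
     inj_on p {1..k} \<and> (\<forall>i\<in>{1..k}. vv_twofold X Y f (p i)) \<and>
     (\<exists>T>0. (\<forall>t. \<gamma> (t + T) = \<gamma> t) \<and>
       (\<exists>\<tau>::nat \<Rightarrow> real.
          (\<forall>j\<le>2*k+1. \<tau> j < \<tau> (Suc j)) \<and> \<tau> (2*k+2) = \<tau> 0 + T \<and>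
          (\<forall>j\<le>2*k+1. \<gamma> (\<tau> j) \<in> Sig f) \<and>
          (\<forall>j\<le>2*k+1. \<forall>s. \<tau> j < s \<and> s < \<tau> (Suc j) \<longrightarrow> \<gamma> s \<notin> Sig f) \<and>
          crossing X Y f (\<gamma> (\<tau> 0)) \<and> crossing X Y f (\<gamma> (\<tau> (k+1))) \<and>
          (\<forall>i\<in>{1..k}. \<gamma> (\<tau> i) = p i \<and> \<gamma> (\<tau> (k+1+i)) = p (k+1-i))))"

definition reach :: "(pt \<Rightarrow> pt) \<Rightarrow> pt set \<Rightarrow> pt \<Rightarrow> pt \<Rightarrow> bool" where
  "reach V S p q \<longleftrightarrow> (\<exists>T\<ge>0. \<exists>\<gamma>. \<gamma> 0 = p \<and> \<gamma> T = q \<and> sol_in V S \<gamma> 0 T)"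

definition sigma_equiv ::
  "(pt \<Rightarrow> pt) \<Rightarrow> (pt \<Rightarrow> pt) \<Rightarrow> (pt \<Rightarrow> real) \<Rightarrow> pt set \<Rightarrow>
   (pt \<Rightarrow> pt) \<Rightarrow> (pt \<Rightarrow> pt) \<Rightarrow> (pt \<Rightarrow> real) \<Rightarrow> pt set \<Rightarrow> bool" where
  "sigma_equiv X Y f L X' Y' f' L' \<longleftrightarrow>
    (\<exists>h g. homeomorphism L L' h g \<and>
      h ` (L \<inter> Sig f) = L' \<inter> Sig f' \<and>
      h ` (L \<inter> Splus f) = L' \<inter> Splus f' \<and>
      h ` (L \<inter> Sminus f) = L' \<inter> Sminus f' \<and>
      h ` (L \<inter> slide_esc X Y f) = L' \<inter> slide_esc X' Y' f' \<and>
      (\<forall>p\<in>L \<inter> Splus f. \<forall>q\<in>L \<inter> Splus f.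
          reach X (L \<inter> Splus f) p q \<longleftrightarrow> reach X' (L' \<inter> Splus f') (h p) (h q)) \<and>
      (\<forall>p\<in>L \<inter> Sminus f. \<forall>q\<in>L \<inter> Sminus f.
          reach Y (L \<inter> Sminus f) p q \<longleftrightarrow> reach Y' (L' \<inter> Sminus f') (h p) (h q)) \<and>
      (\<forall>p\<in>L \<inter> slide_esc X Y f. \<forall>q\<in>L \<inter> slide_esc X Y f.
          reach (ZT X Y f) (L \<inter> slide_esc X Y f) p q \<longleftrightarrow>
          reach (ZT X' Y' f') (L' \<inter> slide_esc X' Y' f') (h p) (h q)))"

definition Pk :: "nat \<Rightarrow> real \<Rightarrow> real" where
  "Pk k x = - ((x + (real k - 1) / 2) * (x - (real k - 1) / 2) *
              (\<Prod>i=1..k-1. (x - (real i - real k / 2))^2))"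

definition Xk :: "nat \<Rightarrow> pt \<Rightarrow> pt" where
  "Xk k = (\<lambda>(x, y). (1, deriv (Pk k) x))"

definition Yk :: "nat \<Rightarrow> pt \<Rightarrow> pt" where
  "Yk k = (\<lambda>(x, y). (-1, deriv (Pk k) x))"

definition Lk :: "nat \<Rightarrow> pt set" where
  "Lk k = {(x, Pk k x) | x. (1 - real k) / 2 \<le> x \<and> x \<le> (real k - 1) / 2}
        \<union> {(x, - Pk k x) | x. (1 - real k) / 2 \<le> x \<and> x \<le> (real k - 1) / 2}"

end

theory Submission
  imports Defs
begin

lemma hvd_Un:
  assumes "(f has_vector_derivative v) (at x within S)" "(f has_vector_derivative v) (at x within T)"
  shows "(f has_vector_derivative v) (at x within S \<union> T)"
proof -
  have e: "at x within S \<union> T = sup (at x within S) (at x within T)" by (rule at_within_union)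
  let ?g = "\<lambda>y. (f y - f x - (y - x) *\<^sub>R v) /\<^sub>R norm (y - x)"
  have "(?g \<longlongrightarrow> 0) (at x within S)" "(?g \<longlongrightarrow> 0) (at x within T)"
    using assms unfolding has_vector_derivative_def has_derivative_at_within by auto
  then have "(?g \<longlongrightarrow> 0) (at x within S \<union> T)" unfolding e by (rule filterlim_sup)
  then show ?thesis unfolding has_vector_derivative_def has_derivative_at_within
    by (simp add: bounded_linear_scaleR_left)
qed

lemma hvd_notlimpt:
  assumes "\<not> x islimpt S"
  shows "(f has_vector_derivative v) (at x within S)"
proof -
  have "at x within S = bot" using assms by (simp add: trivial_limit_within)
  then show ?thesis unfolding has_vector_derivative_def has_derivative_at_within
    by (simp add: bounded_linear_scaleR_left)
qed

lemma hvd_Icc_out: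
  fixes f :: "real \<Rightarrow> 'a::real_normed_vector"
  assumes "x \<notin> {a..b}"
  shows "(f has_vector_derivative v) (at x within {a..b})"
  by (rule hvd_notlimpt) (meson assms closed_atLeastAtMost closed_limpt islimpt_subset order_refl)

lemma sol_in_sub:
  assumes "sol_in V S \<gamma> a b" "a \<le> c" "c \<le> d" "d \<le> b"
  shows "sol_in V S \<gamma> c d"
  using assms unfolding sol_in_def
  by (auto intro: has_vector_derivative_within_subset[where S="{a..b}"])

lemma sol_in_concat:
  assumes "sol_in V S \<gamma> a b" "sol_in V S \<gamma> b c"
  shows "sol_in V S \<gamma> a c"
  unfolding sol_in_def
proof (intro conjI ballI)
  show "a \<le> c" using assms by (auto simp: sol_in_def)
  fix t assume t: "t \<in> {a..c}"
  show "\<gamma> t \<in> S" using assms t by (cases "t \<le> b") (auto simp: sol_in_def)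
  have "{a..c} = {a..b} \<union> {b..c}" using assms by (auto simp: sol_in_def)
  moreover have "(\<gamma> has_vector_derivative V (\<gamma> t)) (at t within {a..b})"
    using assms t by (cases "t \<le> b") (auto simp: sol_in_def intro: hvd_Icc_out)
  moreover have "(\<gamma> has_vector_derivative V (\<gamma> t)) (at t within {b..c})"
    using assms t by (cases "b \<le> t") (auto simp: sol_in_def intro: hvd_Icc_out)
  ultimately show "(\<gamma> has_vector_derivative V (\<gamma> t)) (at t within {a..c})"
    by (metis hvd_Un)
qed

lemma sol_in_shift:
  assumes "sol_in V S \<gamma> a b"
  shows "sol_in V S (\<lambda>s. \<gamma> (s + c)) (a - c) (b - c)"
  unfolding sol_in_def
proof (intro conjI ballI)
  show "a - c \<le> b - c" using assms by (auto simp: sol_in_def)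
  fix t assume t: "t \<in> {a - c..b - c}"
  then have tc: "t + c \<in> {a..b}" by auto
  then show "\<gamma> (t + c) \<in> S" using assms by (auto simp: sol_in_def)
  have im: "(\<lambda>s. s + c) ` {a - c..b - c} = {a..b}"
    by (auto simp: image_iff intro!: bexI[where x="_ - c"])
  have d1: "((\<lambda>s. s + c) has_vector_derivative 1) (at t within {a - c..b - c})"
    by (auto intro!: derivative_eq_intros)
  have d2: "(\<gamma> has_vector_derivative V (\<gamma> (t + c))) (at (t + c) within (\<lambda>s. s + c) ` {a - c..b - c})"
    using assms tc im by (auto simp: sol_in_def)
  from vector_diff_chain_within[OF d1 d2]
  show "((\<lambda>s. \<gamma> (s + c)) has_vector_derivative V (\<gamma> (t + c))) (at t within {a - c..b - c})"
    by (simp add: o_def)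
qed


lemma piece_pos:
  assumes "local_piece X Y f \<gamma> a b" "s \<in> {a..b}" "f (\<gamma> s) > 0"
  shows "sol_in X (Splus f) \<gamma> a b"
proof -
  have "\<not> sol_in Y (Sminus f) \<gamma> a b"
    using assms(2,3) unfolding sol_in_def Sminus_def by force
  moreover have "\<not> sol_in (ZT X Y f) (ZT_dom X Y f) \<gamma> a b"
    using assms(2,3) unfolding sol_in_def ZT_dom_def Sig_def by force
  ultimately show ?thesis using assms(1) unfolding local_piece_def by blast
qed

lemma piece_neg:
  assumes "local_piece X Y f \<gamma> a b" "s \<in> {a..b}" "f (\<gamma> s) < 0"
  shows "sol_in Y (Sminus f) \<gamma> a b"
proof -
  have "\<not> sol_in X (Splus f) \<gamma> a b"
    using assms(2,3) unfolding sol_in_def Splus_def by force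
  moreover have "\<not> sol_in (ZT X Y f) (ZT_dom X Y f) \<gamma> a b"
    using assms(2,3) unfolding sol_in_def ZT_dom_def Sig_def by force
  ultimately show ?thesis using assms(1) unfolding local_piece_def by blast
qed

lemma piece_cont:
  assumes "local_piece X Y f \<gamma> a b" "t \<in> {a..b}"
  shows "continuous (at t within {a..b}) \<gamma>"
  using assms unfolding local_piece_def sol_in_def
  by (auto intro: has_vector_derivative_continuous)

lemma cont_Un:
  assumes "continuous (at x within S) g" "continuous (at x within T) g"
  shows "continuous (at x within S \<union> T) g"
proof -
  have e: "at x within S \<union> T = sup (at x within S) (at x within T)" by (rule at_within_union)
  have "(g \<longlongrightarrow> g x) (at x within S)" "(g \<longlongrightarrow> g x) (at x within T)"
    using assms unfolding continuous_within by auto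
  then have "(g \<longlongrightarrow> g x) (at x within S \<union> T)" unfolding e by (rule filterlim_sup)
  then show ?thesis unfolding continuous_within .
qed

lemma global_traj_cont:
  assumes "global_traj X Y f \<gamma>"
  shows "continuous_on UNIV \<gamma>"
proof (rule continuous_at_imp_continuous_on, intro ballI)
  fix t :: real
  obtain e where e: "e > 0" "local_piece X Y f \<gamma> (t - e) t" "local_piece X Y f \<gamma> t (t + e)"
    using assms unfolding global_traj_def by blast
  have "continuous (at t within {t - e..t} \<union> {t..t + e}) \<gamma>"
    using e by (intro cont_Un piece_cont) auto
  moreover have "{t - e..t} \<union> {t..t + e} = {t - e..t + e}" using e by auto
  ultimately have "continuous (at t within {t - e..t + e}) \<gamma>" by simp
  then show "isCont \<gamma> t" using e by (simp add: at_within_Icc_at)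
qed

lemma hvd_right_transfer:
  fixes g :: "real \<Rightarrow> 'a::real_normed_vector"
  assumes "(g has_vector_derivative v) (at b within {b..c})" "b < c" "b < e"
  shows "(g has_vector_derivative v) (at b within {b..e})"
  using assms by (simp add: at_within_Icc_at_right)

lemma hvd_left_transfer:
  fixes g :: "real \<Rightarrow> 'a::real_normed_vector"
  assumes "(g has_vector_derivative v) (at e within {c..e})" "c < e" "b < e"
  shows "(g has_vector_derivative v) (at e within {b..e})"
  using assms by (simp add: at_within_Icc_at_left)

lemma hvd_two_sided:
  fixes g :: "real \<Rightarrow> 'a::real_normed_vector"
  assumes "(g has_vector_derivative v) (at t within {t - e1..t})"
    "(g has_vector_derivative v) (at t within {t..t + e2})" "e1 > 0" "e2 > 0"
  shows "(g has_vector_derivative v) (at t within S)"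
proof -
  have "(g has_vector_derivative v) (at t within {t - e1..t} \<union> {t..t + e2})"
    using assms by (intro hvd_Un)
  moreover have "{t - e1..t} \<union> {t..t + e2} = {t - e1..t + e2}" using assms by auto
  ultimately have "(g has_vector_derivative v) (at t within {t - e1..t + e2})" by simp
  then have "(g has_vector_derivative v) (at t)" using assms by (simp add: at_within_Icc_at)
  then show ?thesis by (rule has_vector_derivative_at_within)
qed


lemma arc_sol_gen:
  assumes gt: "global_traj X Y f \<gamma>" and be: "b < e"
    and pos: "\<forall>s\<in>{b<..<e}. P (f (\<gamma> s))"
    and Pb: "\<gamma> b \<in> S" and Pe: "\<gamma> e \<in> S"
    and forced: "\<And>a c s. local_piece X Y f \<gamma> a c \<Longrightarrow> s \<in> {a..c} \<Longrightarrow> P (f (\<gamma> s)) \<Longrightarrow> sol_in V S \<gamma> a c"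
    and PS: "\<And>s. P (f (\<gamma> s)) \<Longrightarrow> \<gamma> s \<in> S"
  shows "sol_in V S \<gamma> b e"
  unfolding sol_in_def
proof (intro conjI ballI)
  show "b \<le> e" using be by simp
  fix t assume t: "t \<in> {b..e}"
  show "\<gamma> t \<in> S"
  proof (cases "t = b \<or> t = e")
    case True then show ?thesis using Pb Pe by auto
  next
    case False then have "t \<in> {b<..<e}" using t by auto
    then show ?thesis using pos PS by blast
  qed
  obtain \<epsilon> where \<epsilon>: "\<epsilon> > 0" "local_piece X Y f \<gamma> (t - \<epsilon>) t" "local_piece X Y f \<gamma> t (t + \<epsilon>)"
    using gt unfolding global_traj_def by blast
  show "(\<gamma> has_vector_derivative V (\<gamma> t)) (at t within {b..e})"
  proof (cases "t = b")
    case True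
    define s where "s = b + min \<epsilon> (e - b) / 2"
    have s: "s \<in> {t..t + \<epsilon>}" "s \<in> {b<..<e}" using True be \<epsilon> by (auto simp: s_def min_def field_simps)
    have "sol_in V S \<gamma> t (t + \<epsilon>)" using forced[OF \<epsilon>(3) s(1)] pos s by auto
    then have "(\<gamma> has_vector_derivative V (\<gamma> t)) (at t within {t..t + \<epsilon>})"
      by (auto simp: sol_in_def)
    then have "(\<gamma> has_vector_derivative V (\<gamma> b)) (at b within {b..b + \<epsilon>})" using True by simp
    from hvd_right_transfer[OF this] show ?thesis using True be \<epsilon> by auto
  next
    case nb: False
    show ?thesis
    proof (cases "t = e")
      case True
      define s where "s = e - min \<epsilon> (e - b) / 2"
      have s: "s \<in> {t - \<epsilon>..t}" "s \<in> {b<..<e}" using True be \<epsilon> by (auto simp: s_def min_def field_simps)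
      have "sol_in V S \<gamma> (t - \<epsilon>) t" using forced[OF \<epsilon>(2) s(1)] pos s by auto
      then have "(\<gamma> has_vector_derivative V (\<gamma> t)) (at t within {t - \<epsilon>..t})"
        by (auto simp: sol_in_def)
      then have "(\<gamma> has_vector_derivative V (\<gamma> e)) (at e within {e - \<epsilon>..e})" using True by simp
      from hvd_left_transfer[OF this] show ?thesis using True be \<epsilon> by auto
    next
      case False
      then have tt: "t \<in> {b<..<e}" using t nb by auto
      have "sol_in V S \<gamma> t (t + \<epsilon>)" using forced[OF \<epsilon>(3), of t] pos tt \<epsilon> by auto
      then have 1: "(\<gamma> has_vector_derivative V (\<gamma> t)) (at t within {t..t + \<epsilon>})"
        by (auto simp: sol_in_def)
      have "sol_in V S \<gamma> (t - \<epsilon>) t" using forced[OF \<epsilon>(2), of t] pos tt \<epsilon> by auto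
      then have 2: "(\<gamma> has_vector_derivative V (\<gamma> t)) (at t within {t - \<epsilon>..t})"
        by (auto simp: sol_in_def)
      show ?thesis by (rule hvd_two_sided[OF 2 1 \<epsilon>(1) \<epsilon>(1)])
    qed
  qed
qed

lemma arc_sol_pos:
  assumes "global_traj X Y f \<gamma>" "b < e" "\<forall>s\<in>{b<..<e}. f (\<gamma> s) > 0"
    "f (\<gamma> b) \<ge> 0" "f (\<gamma> e) \<ge> 0"
  shows "sol_in X (Splus f) \<gamma> b e"
proof (rule arc_sol_gen[where P="\<lambda>x. x > 0", OF assms(1,2,3)])
  show "\<gamma> b \<in> Splus f" "\<gamma> e \<in> Splus f" using assms(4,5) by (auto simp: Splus_def)
  show "\<And>s. 0 < f (\<gamma> s) \<Longrightarrow> \<gamma> s \<in> Splus f" by (auto simp: Splus_def)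
  show "\<And>a c s. local_piece X Y f \<gamma> a c \<Longrightarrow> s \<in> {a..c} \<Longrightarrow> 0 < f (\<gamma> s) \<Longrightarrow> sol_in X (Splus f) \<gamma> a c"
    by (rule piece_pos)
qed

lemma arc_sol_neg:
  assumes "global_traj X Y f \<gamma>" "b < e" "\<forall>s\<in>{b<..<e}. f (\<gamma> s) < 0"
    "f (\<gamma> b) \<le> 0" "f (\<gamma> e) \<le> 0"
  shows "sol_in Y (Sminus f) \<gamma> b e"
proof (rule arc_sol_gen[where P="\<lambda>x. x < 0", OF assms(1,2,3)])
  show "\<gamma> b \<in> Sminus f" "\<gamma> e \<in> Sminus f" using assms(4,5) by (auto simp: Sminus_def)
  show "\<And>s. f (\<gamma> s) < 0 \<Longrightarrow> \<gamma> s \<in> Sminus f" by (auto simp: Sminus_def)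
  show "\<And>a c s. local_piece X Y f \<gamma> a c \<Longrightarrow> s \<in> {a..c} \<Longrightarrow> f (\<gamma> s) < 0 \<Longrightarrow> sol_in Y (Sminus f) \<gamma> a c"
    by (rule piece_neg)
qed


lemma smooth_has_derivative:
  assumes "smooth g"
  shows "(g has_derivative frechet_derivative g (at x)) (at x)"
proof -
  have "Ck (Suc 0) g" using assms unfolding smooth_def by blast
  then have "g differentiable_on UNIV" by simp
  then have "g differentiable (at x)" by (simp add: differentiable_on_def)
  then show ?thesis by (simp add: frechet_derivative_works)
qed

lemma comp_deriv:
  assumes f: "smooth f" and g: "(\<gamma> has_vector_derivative v) (at t within S)"
  shows "((\<lambda>s. f (\<gamma> s)) has_real_derivative frechet_derivative f (at (\<gamma> t)) v) (at t within S)"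
proof -
  let ?D = "frechet_derivative f (at (\<gamma> t))"
  have fd: "(f has_derivative ?D) (at (\<gamma> t) within \<gamma> ` S)"
    using smooth_has_derivative[OF f] by (rule has_derivative_at_withinI)
  have gd: "(\<gamma> has_derivative (\<lambda>h. h *\<^sub>R v)) (at t within S)"
    using g by (simp add: has_vector_derivative_def)
  have bl: "bounded_linear ?D" using smooth_has_derivative[OF f] by (rule has_derivative_bounded_linear)
  have "((f \<circ> \<gamma>) has_derivative (?D \<circ> (\<lambda>h. h *\<^sub>R v))) (at t within S)"
    by (rule diff_chain_within[OF gd fd])
  moreover have "(?D \<circ> (\<lambda>h. h *\<^sub>R v)) = (\<lambda>h. h *\<^sub>R ?D v)"
    using bl[THEN bounded_linear.linear, THEN linear_cmul] by (auto simp: o_def)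
  ultimately have "((\<lambda>s. f (\<gamma> s)) has_vector_derivative ?D v) (at t within S)"
    by (simp add: has_vector_derivative_def o_def)
  then show ?thesis by (simp add: has_real_derivative_iff_has_vector_derivative)
qed

lemma lie_deriv:
  assumes f: "smooth f" and s: "sol_in V S \<gamma> a b" and t: "t \<in> {a..b}"
  shows "((\<lambda>s. f (\<gamma> s)) has_real_derivative Lie V f (\<gamma> t)) (at t within {a..b})"
  using comp_deriv[OF f, of \<gamma> "V (\<gamma> t)" t "{a..b}"] s t unfolding sol_in_def Lie_def by auto

lemma sign_right_ge:
  fixes g :: "real \<Rightarrow> real"
  assumes d: "(g has_real_derivative d) (at a within {a..b})" and ab: "a < b" and ga: "g a = 0"
    and pos: "\<forall>s\<in>{a<..<b}. g s \<ge> 0"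
  shows "d \<ge> 0"
proof (rule ccontr)
  assume "\<not> d \<ge> 0"
  then obtain \<delta> where \<delta>: "\<delta> > 0" "\<forall>h>0. a + h \<in> {a..b} \<longrightarrow> h < \<delta> \<longrightarrow> g a > g (a + h)"
    using has_real_derivative_neg_dec_right[OF d] by force
  define h where "h = min \<delta> (b - a) / 2"
  have h: "h > 0" "h < \<delta>" "a + h \<in> {a..b}" "a + h \<in> {a<..<b}"
    using \<delta> ab by (auto simp: h_def min_def field_simps)
  then show False using \<delta> pos ga by force
qed

lemma sign_right_le:
  fixes g :: "real \<Rightarrow> real"
  assumes d: "(g has_real_derivative d) (at a within {a..b})" and ab: "a < b" and ga: "g a = 0"
    and neg: "\<forall>s\<in>{a<..<b}. g s \<le> 0"
  shows "d \<le> 0"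
proof (rule ccontr)
  assume "\<not> d \<le> 0"
  then obtain \<delta> where \<delta>: "\<delta> > 0" "\<forall>h>0. a + h \<in> {a..b} \<longrightarrow> h < \<delta> \<longrightarrow> g a < g (a + h)"
    using has_real_derivative_pos_inc_right[OF d] by force
  define h where "h = min \<delta> (b - a) / 2"
  have h: "h > 0" "h < \<delta>" "a + h \<in> {a..b}" "a + h \<in> {a<..<b}"
    using \<delta> ab by (auto simp: h_def min_def field_simps)
  then show False using \<delta> neg ga by force
qed

lemma sign_left_ge:
  fixes g :: "real \<Rightarrow> real"
  assumes d: "(g has_real_derivative d) (at b within {a..b})" and ab: "a < b" and gb: "g b = 0"
    and pos: "\<forall>s\<in>{a<..<b}. g s \<ge> 0"
  shows "d \<le> 0"
proof (rule ccontr)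
  assume "\<not> d \<le> 0"
  then obtain \<delta> where \<delta>: "\<delta> > 0" "\<forall>h>0. b - h \<in> {a..b} \<longrightarrow> h < \<delta> \<longrightarrow> g (b - h) < g b"
    using has_real_derivative_pos_inc_left[OF d] by force
  define h where "h = min \<delta> (b - a) / 2"
  have h: "h > 0" "h < \<delta>" "b - h \<in> {a..b}" "b - h \<in> {a<..<b}"
    using \<delta> ab by (auto simp: h_def min_def field_simps)
  then show False using \<delta> pos gb by force
qed

lemma sign_left_le:
  fixes g :: "real \<Rightarrow> real"
  assumes d: "(g has_real_derivative d) (at b within {a..b})" and ab: "a < b" and gb: "g b = 0"
    and neg: "\<forall>s\<in>{a<..<b}. g s \<le> 0"
  shows "d \<ge> 0"
proof (rule ccontr)
  assume "\<not> d \<ge> 0"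
  then obtain \<delta> where \<delta>: "\<delta> > 0" "\<forall>h>0. b - h \<in> {a..b} \<longrightarrow> h < \<delta> \<longrightarrow> g (b - h) > g b"
    using has_real_derivative_neg_dec_left[OF d] by force
  define h where "h = min \<delta> (b - a) / 2"
  have h: "h > 0" "h < \<delta>" "b - h \<in> {a..b}" "b - h \<in> {a<..<b}"
    using \<delta> ab by (auto simp: h_def min_def field_simps)
  then show False using \<delta> neg gb by force
qed


lemma deriv_nonpos_mono:
  fixes g :: "real \<Rightarrow> real"
  assumes d: "\<forall>s\<in>{a..b}. (g has_real_derivative g' s) (at s within {a..b})"
    and n: "\<forall>s\<in>{a..b}. g' s \<le> 0" and xy: "a \<le> x" "x \<le> y" "y \<le> b"
  shows "g y \<le> g x"
proof (cases "x = y")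
  case True then show ?thesis by simp
next
  case False
  then have lt: "x < y" using xy by simp
  have "continuous_on {a..b} g"
    using d by (auto simp: continuous_on_eq_continuous_within intro: DERIV_continuous)
  then have c: "continuous_on {x..y} g" by (rule continuous_on_subset) (use xy in auto)
  have dz: "(g has_real_derivative g' z) (at z)" if "x < z" "z < y" for z
  proof -
    have "(g has_real_derivative g' z) (at z within {a..b})" using d that xy by auto
    moreover have "at z within {a..b} = at z" using that xy by (intro at_within_Icc_at) auto
    ultimately show ?thesis by simp
  qed
  obtain l z where z: "x < z" "z < y" "DERIV g z :> l" "g y - g x = (y - x) * l"
    using MVT[OF lt c] dz real_differentiable_def by meson
  have "l = g' z" using DERIV_unique[OF z(3) dz[OF z(1,2)]] .
  moreover have "g' z \<le> 0" using n z xy by auto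
  ultimately have "(y - x) * l \<le> 0" using lt by (simp add: mult_nonneg_nonpos)
  then show ?thesis using z by simp
qed

lemma smooth_lip:
  fixes V :: "pt \<Rightarrow> pt"
  assumes "smooth V"
  shows "\<exists>L\<ge>0. \<forall>x y. norm x \<le> R \<longrightarrow> norm y \<le> R \<longrightarrow> norm (V x - V y) \<le> L * norm (x - y)"
proof -
  define D where "D = (\<lambda>x. frechet_derivative V (at x))"
  have hd: "(V has_derivative D x) (at x)" for x
    unfolding D_def by (rule smooth_has_derivative[OF assms])
  have "Ck (Suc (Suc 0)) V" using assms unfolding smooth_def by blast
  then have "\<forall>v. (\<lambda>x. D x v) differentiable_on UNIV" unfolding D_def by simp
  then have cont: "continuous_on UNIV (\<lambda>x. D x v)" for v
    by (metis differentiable_imp_continuous_on)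
  have bnd: "\<exists>B\<ge>0. \<forall>x\<in>cball 0 R. norm (D x v) \<le> B" for v
  proof -
    have "compact ((\<lambda>x. D x v) ` cball 0 R)"
      by (rule compact_continuous_image) (auto intro: continuous_on_subset[OF cont[of v]])
    then obtain B where "\<forall>z\<in>(\<lambda>x. D x v) ` cball 0 R. norm z \<le> B"
      using compact_imp_bounded bounded_iff by metis
    then show ?thesis by (intro exI[where x="max B 0"]) auto
  qed
  obtain B1 where B1: "B1 \<ge> 0" "\<forall>x\<in>cball 0 R. norm (D x (1, 0)) \<le> B1" using bnd by blast
  obtain B2 where B2: "B2 \<ge> 0" "\<forall>x\<in>cball 0 R. norm (D x (0, 1)) \<le> B2" using bnd by blast
  have on: "onorm (D x) \<le> B1 + B2" if x: "x \<in> cball 0 R" for x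
  proof (rule onorm_le)
    fix h :: pt
    obtain h1 h2 where h: "h = (h1, h2)" by fastforce
    have lin: "linear (D x)" using hd[of x] by (rule has_derivative_linear)
    have e: "h = h1 *\<^sub>R (1, 0) + h2 *\<^sub>R (0, 1)" using h by simp
    have "D x h = h1 *\<^sub>R D x (1, 0) + h2 *\<^sub>R D x (0, 1)"
      by (subst e) (simp only: linear_add[OF lin] linear_cmul[OF lin])
    then have "norm (D x h) \<le> \<bar>h1\<bar> * norm (D x (1, 0)) + \<bar>h2\<bar> * norm (D x (0, 1))"
      by (metis norm_scaleR norm_triangle_ineq)
    also have "\<dots> \<le> \<bar>h1\<bar> * B1 + \<bar>h2\<bar> * B2"
      using B1 B2 x by (intro add_mono mult_left_mono) auto
    also have "\<dots> \<le> norm h * B1 + norm h * B2"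
    proof -
      have "\<bar>h1\<bar> \<le> norm h" "\<bar>h2\<bar> \<le> norm h" using h norm_fst_le[of h1 h2] norm_snd_le[of h2 h1] by auto
      then show ?thesis using B1 B2 by (intro add_mono mult_right_mono) auto
    qed
    finally show "norm (D x h) \<le> (B1 + B2) * norm h" by (simp add: algebra_simps)
  qed
  have "norm (V x - V y) \<le> (B1 + B2) * norm (x - y)" if "norm x \<le> R" "norm y \<le> R" for x y
    by (rule differentiable_bound[of "cball 0 R" V D]) (use that on hd in \<open>auto intro: has_derivative_at_withinI\<close>)
  then show ?thesis using B1 B2 by (intro exI[where x="B1 + B2"]) auto
qed

lemma ode_unique:
  fixes u w :: "real \<Rightarrow> pt"
  assumes V: "smooth V"
    and du: "\<forall>t\<in>{a..b}. (u has_vector_derivative V (u t)) (at t within {a..b})"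
    and dw: "\<forall>t\<in>{a..b}. (w has_vector_derivative V (w t)) (at t within {a..b})"
    and t0: "t0 \<in> {a..b}" and eq: "u t0 = w t0" and t: "t \<in> {a..b}"
  shows "u t = w t"
proof -
  have cu: "continuous_on {a..b} u"
    using du by (auto simp: continuous_on_eq_continuous_within intro: has_vector_derivative_continuous)
  have cw: "continuous_on {a..b} w"
    using dw by (auto simp: continuous_on_eq_continuous_within intro: has_vector_derivative_continuous)
  obtain R1 where R1: "\<forall>z\<in>u ` {a..b}. norm z \<le> R1"
    using compact_continuous_image[OF cu compact_Icc] compact_imp_bounded bounded_iff by metis
  obtain R2 where R2: "\<forall>z\<in>w ` {a..b}. norm z \<le> R2"
    using compact_continuous_image[OF cw compact_Icc] compact_imp_bounded bounded_iff by metis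
  define R where "R = max R1 R2"
  obtain L where L: "L \<ge> 0" "\<forall>x y. norm x \<le> R \<longrightarrow> norm y \<le> R \<longrightarrow> norm (V x - V y) \<le> L * norm (x - y)"
    using smooth_lip[OF V] by blast
  define q where "q s = (u s - w s) \<bullet> (u s - w s)" for s
  define q' where "q' s = 2 * ((u s - w s) \<bullet> (V (u s) - V (w s)))" for s
  have qd: "(q has_real_derivative q' s) (at s within {a..b})" if s: "s \<in> {a..b}" for s
  proof -
    have "((\<lambda>s. u s - w s) has_derivative (\<lambda>h. h *\<^sub>R V (u s) - h *\<^sub>R V (w s))) (at s within {a..b})"
      using du dw s unfolding has_vector_derivative_def by (intro has_derivative_diff) auto
    moreover have e: "(\<lambda>h. h *\<^sub>R V (u s) - h *\<^sub>R V (w s)) = (\<lambda>h. h *\<^sub>R (V (u s) - V (w s)))"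
      by (simp add: fun_eq_iff scaleR_diff_right)
    ultimately have dd: "((\<lambda>s. u s - w s) has_derivative (\<lambda>h. h *\<^sub>R (V (u s) - V (w s)))) (at s within {a..b})"
      by (rule has_derivative_eq_rhs)
    have "(q has_derivative (\<lambda>h. (u s - w s) \<bullet> (h *\<^sub>R (V (u s) - V (w s))) + (h *\<^sub>R (V (u s) - V (w s))) \<bullet> (u s - w s))) (at s within {a..b})"
      unfolding q_def by (rule has_derivative_inner[OF dd dd])
    moreover have "(\<lambda>h. (u s - w s) \<bullet> (h *\<^sub>R (V (u s) - V (w s))) + (h *\<^sub>R (V (u s) - V (w s))) \<bullet> (u s - w s)) = (\<lambda>h. h *\<^sub>R q' s)"
      by (auto simp: q'_def inner_commute algebra_simps)
    ultimately show ?thesis by (simp add: has_real_derivative_iff_has_vector_derivative has_vector_derivative_def)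
  qed
  have qb: "\<bar>q' s\<bar> \<le> 2 * L * q s" if s: "s \<in> {a..b}" for s
  proof -
    have "norm (u s) \<le> R1" "norm (w s) \<le> R2" using R1 R2 s by auto
    then have n1: "norm (u s) \<le> R" "norm (w s) \<le> R" by (auto simp: R_def)
    have "\<bar>(u s - w s) \<bullet> (V (u s) - V (w s))\<bar> \<le> norm (u s - w s) * norm (V (u s) - V (w s))"
      by (rule Cauchy_Schwarz_ineq2)
    also have "\<dots> \<le> norm (u s - w s) * (L * norm (u s - w s))"
    proof -
      have "norm (V (u s) - V (w s)) \<le> L * norm (u s - w s)" using L(2) n1 by blast
      then show ?thesis by (intro mult_left_mono) auto
    qed
    also have "\<dots> = L * q s" by (simp add: q_def power2_norm_eq_inner[symmetric] power2_eq_square)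
    finally show ?thesis by (simp add: q'_def abs_mult)
  qed
  have q0: "q s \<ge> 0" for s by (simp add: q_def)
  have qt0: "q t0 = 0" using eq by (simp add: q_def)
  have "q t \<le> 0"
  proof (cases "t0 \<le> t")
    case True
    define G where "G s = exp (- 2 * L * s) * q s" for s
    define G' where "G' s = exp (- 2 * L * s) * q' s + (- 2 * L) * exp (- 2 * L * s) * q s" for s
    have Gd: "\<forall>s\<in>{a..b}. (G has_real_derivative G' s) (at s within {a..b})"
      unfolding G_def G'_def using qd
      by (auto intro!: derivative_eq_intros simp: algebra_simps)
    have Gn: "\<forall>s\<in>{a..b}. G' s \<le> 0"
    proof
      fix s assume s: "s \<in> {a..b}"
      have "q' s - 2 * L * q s \<le> 0" using qb[OF s] by linarith
      then have "exp (- 2 * L * s) * (q' s - 2 * L * q s) \<le> 0"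
        by (simp add: mult_nonneg_nonpos)
      then show "G' s \<le> 0" by (simp add: G'_def algebra_simps)
    qed
    have "G t \<le> G t0" using deriv_nonpos_mono[OF Gd Gn] t0 t True by auto
    then have "exp (- 2 * L * t) * q t \<le> 0" using qt0 by (simp add: G_def)
    then show ?thesis by (simp add: mult_le_0_iff)
  next
    case False
    define G where "G s = - (exp (2 * L * s) * q s)" for s
    define G' where "G' s = - (exp (2 * L * s) * q' s + (2 * L) * exp (2 * L * s) * q s)" for s
    have Gd: "\<forall>s\<in>{a..b}. (G has_real_derivative G' s) (at s within {a..b})"
      unfolding G_def G'_def using qd
      by (auto intro!: derivative_eq_intros simp: algebra_simps)
    have Gn: "\<forall>s\<in>{a..b}. G' s \<le> 0"
    proof
      fix s assume s: "s \<in> {a..b}"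
      have "q' s + 2 * L * q s \<ge> 0" using qb[OF s] by linarith
      then have "exp (2 * L * s) * (q' s + 2 * L * q s) \<ge> 0"
        by simp
      then show "G' s \<le> 0" by (simp add: G'_def algebra_simps)
    qed
    have "G t0 \<le> G t" using deriv_nonpos_mono[OF Gd Gn] t0 t False by auto
    then have "exp (2 * L * t) * q t \<le> 0" using qt0 by (simp add: G_def)
    then show ?thesis by (simp add: mult_le_0_iff)
  qed
  then have "q t = 0" using q0[of t] by linarith
  then show ?thesis by (simp add: q_def)
qed


definition xr :: "nat \<Rightarrow> nat \<Rightarrow> real" where
  "xr k j = (if j = 0 then (1 - real k) / 2 else if j = k then (real k - 1) / 2 else real j - real k / 2)"

lemma Pk_nonneg:
  assumes "(1 - real k) / 2 \<le> x" "x \<le> (real k - 1) / 2"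
  shows "Pk k x \<ge> 0"
proof -
  have "0 \<le> x + (real k - 1) / 2" "x - (real k - 1) / 2 \<le> 0" using assms by (auto simp: field_simps)
  then have "(x + (real k - 1) / 2) * (x - (real k - 1) / 2) \<le> 0"
    by (intro mult_nonneg_nonpos) auto
  moreover have "(\<Prod>i=1..k-1. (x - (real i - real k / 2))^2) \<ge> 0"
    by (intro prod_nonneg) auto
  ultimately show ?thesis unfolding Pk_def by (simp add: mult_nonpos_nonneg)
qed

lemma Pk_zero:
  assumes "k \<ge> 2" "(1 - real k) / 2 \<le> x" "x \<le> (real k - 1) / 2"
  shows "Pk k x = 0 \<longleftrightarrow> (\<exists>j\<le>k. x = xr k j)"
proof
  assume "Pk k x = 0"
  then have "x = - ((real k - 1) / 2) \<or> x = (real k - 1) / 2 \<or> (\<exists>i\<in>{1..k-1}. x = real i - real k / 2)"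
    unfolding Pk_def by auto
  then show "\<exists>j\<le>k. x = xr k j"
  proof (elim disjE)
    assume "x = - ((real k - 1) / 2)" then show ?thesis by (intro exI[of _ 0]) (auto simp: xr_def field_simps)
  next
    assume "x = (real k - 1) / 2" then show ?thesis using assms by (intro exI[of _ k]) (auto simp: xr_def)
  next
    assume "\<exists>i\<in>{1..k-1}. x = real i - real k / 2"
    then obtain i where "i \<in> {1..k-1}" "x = real i - real k / 2" by blast
    then show ?thesis by (intro exI[of _ i]) (auto simp: xr_def)
  qed
next
  assume "\<exists>j\<le>k. x = xr k j"
  then obtain j where j: "j \<le> k" "x = xr k j" by blast
  show "Pk k x = 0"
  proof (cases "j = 0 \<or> j = k")
    case True then show ?thesis using j unfolding Pk_def xr_def by (auto simp: field_simps)
  next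
    case False
    then have "j \<in> {1..k-1}" "x = real j - real k / 2" using j by (auto simp: xr_def)
    then have "(\<Prod>i=1..k-1. (x - (real i - real k / 2))^2) = 0"
      by (intro prod_zero) (auto intro: bexI[of _ j])
    then show ?thesis unfolding Pk_def by simp
  qed
qed

lemma xr_mono:
  assumes "k \<ge> 2" "j < l" "l \<le> k"
  shows "xr k j < xr k l"
  using assms by (auto simp: xr_def field_simps)

lemma xr_range:
  assumes "k \<ge> 2" "j \<le> k"
  shows "(1 - real k) / 2 \<le> xr k j" "xr k j \<le> (real k - 1) / 2"
  using assms by (auto simp: xr_def field_simps)

lemma xr_ends: "xr k 0 = (1 - real k) / 2" "k \<ge> 1 \<Longrightarrow> xr k k = (real k - 1) / 2"
  by (auto simp: xr_def field_simps)

lemma differentiable_prod_real: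
  fixes f :: "nat \<Rightarrow> real \<Rightarrow> real"
  assumes "\<And>i. i \<in> I \<Longrightarrow> f i differentiable (at x)"
  shows "(\<lambda>x. \<Prod>i\<in>I. f i x) differentiable (at x)"
proof (cases "finite I")
  case True then show ?thesis using assms
    by (induction I rule: finite_induct) (auto intro!: differentiable_mult)
next
  case False then show ?thesis by simp
qed

lemma Pk_deriv: "(Pk k has_real_derivative deriv (Pk k) x) (at x)"
proof -
  have "Pk k differentiable (at x)"
    unfolding Pk_def by (intro differentiable_minus differentiable_mult differentiable_prod_real
      differentiable_power differentiable_add differentiable_diff differentiable_ident differentiable_const)
  then show ?thesis by (simp add: DERIV_deriv_iff_real_differentiable)
qed

lemma Pk_cont: "continuous_on S (Pk k)"
  using Pk_deriv by (meson DERIV_continuous continuous_at_imp_continuous_on)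

lemma frechet_snd: "frechet_derivative snd (at (z::pt)) = snd"
proof -
  have "(snd has_derivative snd) (at z)" by (rule has_derivative_snd[OF has_derivative_ident, simplified])
  then show ?thesis by (metis frechet_derivative_at)
qed

lemma model_slide_empty: "slide_esc (Xk k) (Yk k) snd = {}"
proof -
  have "Lie (Xk k) snd z = Lie (Yk k) snd z" for z
    by (cases z) (simp add: Lie_def frechet_snd Xk_def Yk_def)
  then show ?thesis unfolding slide_esc_def by auto
qed


definition Uk :: "nat \<Rightarrow> pt set" where
  "Uk k = {(x, Pk k x) | x. (1 - real k) / 2 \<le> x \<and> x \<le> (real k - 1) / 2}"
definition Dk :: "nat \<Rightarrow> pt set" where
  "Dk k = {(x, - Pk k x) | x. (1 - real k) / 2 \<le> x \<and> x \<le> (real k - 1) / 2}"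

lemma Lk_UD: "Lk k = Uk k \<union> Dk k"
  unfolding Lk_def Uk_def Dk_def ..

lemma hvd_fst:
  assumes "(\<eta> has_vector_derivative v) F"
  shows "((\<lambda>t. fst (\<eta> t)) has_vector_derivative fst v) F"
  using has_derivative_fst[OF assms[unfolded has_vector_derivative_def]]
  by (simp add: has_vector_derivative_def)

lemma hvd_snd:
  assumes "(\<eta> has_vector_derivative v) F"
  shows "((\<lambda>t. snd (\<eta> t)) has_vector_derivative snd v) F"
  using has_derivative_snd[OF assms[unfolded has_vector_derivative_def]]
  by (simp add: has_vector_derivative_def)

lemma fst_Xk: "fst (Xk k z) = 1" by (cases z) (simp add: Xk_def)
lemma fst_Yk: "fst (Yk k z) = -1" by (cases z) (simp add: Yk_def)

lemma fst_linear_sol: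
  assumes "sol_in V S \<eta> 0 T" "\<And>z. fst (V z) = c"
  shows "fst (\<eta> T) = fst (\<eta> 0) + c * T"
proof -
  have T: "T \<ge> 0" using assms by (simp add: sol_in_def)
  have "((\<lambda>t. fst (\<eta> t) - c * t) has_field_derivative 0) (at t within {0..T})" if "t \<in> {0..T}" for t
  proof -
    have "((\<lambda>t. fst (\<eta> t)) has_vector_derivative fst (V (\<eta> t))) (at t within {0..T})"
      using assms(1) that unfolding sol_in_def by (auto intro: hvd_fst)
    then have d: "((\<lambda>t. fst (\<eta> t)) has_real_derivative c) (at t within {0..T})"
      using assms(2) by (simp add: has_real_derivative_iff_has_vector_derivative)
    have "((\<lambda>t. c * t) has_real_derivative c * 1) (at t within {0..T})"
      by (intro DERIV_cmult DERIV_ident)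
    from DERIV_diff[OF d this] show ?thesis by simp
  qed
  note dz = this
  have cv: "convex {0..T}" by simp
  obtain d where dd: "\<forall>t\<in>{0..T}. fst (\<eta> t) - c * t = d"
    using has_field_derivative_zero_constant[OF cv dz] by blast
  have "fst (\<eta> T) - c * T = d" "fst (\<eta> 0) - c * 0 = d" using T bspec[OF dd, of 0] bspec[OF dd, of T] by auto
  then show ?thesis by simp
qed

lemma model_reach_X:
  assumes x: "(1 - real k) / 2 \<le> x1" "x1 \<le> (real k - 1) / 2" "(1 - real k) / 2 \<le> x2" "x2 \<le> (real k - 1) / 2"
  shows "reach (Xk k) (Uk k) (x1, Pk k x1) (x2, Pk k x2) \<longleftrightarrow> x1 \<le> x2"
proof
  assume "reach (Xk k) (Uk k) (x1, Pk k x1) (x2, Pk k x2)"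
  then obtain T \<eta> where T: "T \<ge> 0" "\<eta> 0 = (x1, Pk k x1)" "\<eta> T = (x2, Pk k x2)" "sol_in (Xk k) (Uk k) \<eta> 0 T"
    unfolding reach_def by blast
  have "fst (\<eta> T) = fst (\<eta> 0) + 1 * T" by (rule fst_linear_sol[OF T(4) fst_Xk])
  then show "x1 \<le> x2" using T by simp
next
  assume le: "x1 \<le> x2"
  define \<eta> where "\<eta> t = (x1 + t, Pk k (x1 + t))" for t
  have "sol_in (Xk k) (Uk k) \<eta> 0 (x2 - x1)"
    unfolding sol_in_def
  proof (intro conjI ballI)
    show "0 \<le> x2 - x1" using le by simp
    fix t assume t: "t \<in> {0..x2 - x1}"
    show "\<eta> t \<in> Uk k" using t x unfolding \<eta>_def Uk_def by auto
    have d1: "((\<lambda>t. x1 + t) has_vector_derivative 1) (at t within {0..x2 - x1})"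
      by (auto intro!: derivative_eq_intros)
    have "((\<lambda>t. Pk k (x1 + t)) has_real_derivative deriv (Pk k) (x1 + t) * 1) (at t within {0..x2 - x1})"
      by (rule DERIV_chain2[OF Pk_deriv]) (auto intro!: derivative_eq_intros)
    then have d2: "((\<lambda>t. Pk k (x1 + t)) has_vector_derivative deriv (Pk k) (x1 + t)) (at t within {0..x2 - x1})"
      by (simp add: has_real_derivative_iff_has_vector_derivative)
    show "(\<eta> has_vector_derivative Xk k (\<eta> t)) (at t within {0..x2 - x1})"
      using has_vector_derivative_Pair[OF d1 d2] unfolding \<eta>_def by (simp add: Xk_def)
  qed
  moreover have "\<eta> 0 = (x1, Pk k x1)" "\<eta> (x2 - x1) = (x2, Pk k x2)" by (simp_all add: \<eta>_def)
  ultimately show "reach (Xk k) (Uk k) (x1, Pk k x1) (x2, Pk k x2)"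
    unfolding reach_def using le by (metis diff_ge_0_iff_ge)
qed

lemma model_reach_Y:
  assumes x: "(1 - real k) / 2 \<le> x1" "x1 \<le> (real k - 1) / 2" "(1 - real k) / 2 \<le> x2" "x2 \<le> (real k - 1) / 2"
  shows "reach (Yk k) (Dk k) (x1, - Pk k x1) (x2, - Pk k x2) \<longleftrightarrow> x2 \<le> x1"
proof
  assume "reach (Yk k) (Dk k) (x1, - Pk k x1) (x2, - Pk k x2)"
  then obtain T \<eta> where T: "T \<ge> 0" "\<eta> 0 = (x1, - Pk k x1)" "\<eta> T = (x2, - Pk k x2)" "sol_in (Yk k) (Dk k) \<eta> 0 T"
    unfolding reach_def by blast
  have "fst (\<eta> T) = fst (\<eta> 0) + (-1) * T" by (rule fst_linear_sol[OF T(4) fst_Yk])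
  then show "x2 \<le> x1" using T by simp
next
  assume le: "x2 \<le> x1"
  define \<eta> where "\<eta> t = (x1 - t, - Pk k (x1 - t))" for t
  have "sol_in (Yk k) (Dk k) \<eta> 0 (x1 - x2)"
    unfolding sol_in_def
  proof (intro conjI ballI)
    show "0 \<le> x1 - x2" using le by simp
    fix t assume t: "t \<in> {0..x1 - x2}"
    show "\<eta> t \<in> Dk k" using t x unfolding \<eta>_def Dk_def by auto
    have d1: "((\<lambda>t. x1 - t) has_vector_derivative -1) (at t within {0..x1 - x2})"
      by (auto intro!: derivative_eq_intros)
    have "((\<lambda>t. Pk k (x1 - t)) has_real_derivative deriv (Pk k) (x1 - t) * (-1)) (at t within {0..x1 - x2})"
      by (rule DERIV_chain2[OF Pk_deriv]) (auto intro!: derivative_eq_intros)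
    then have "((\<lambda>t. - Pk k (x1 - t)) has_real_derivative deriv (Pk k) (x1 - t)) (at t within {0..x1 - x2})"
      using DERIV_minus by fastforce
    then have d2: "((\<lambda>t. - Pk k (x1 - t)) has_vector_derivative deriv (Pk k) (x1 - t)) (at t within {0..x1 - x2})"
      by (simp add: has_real_derivative_iff_has_vector_derivative)
    show "(\<eta> has_vector_derivative Yk k (\<eta> t)) (at t within {0..x1 - x2})"
      using has_vector_derivative_Pair[OF d1 d2] unfolding \<eta>_def by (simp add: Yk_def)
  qed
  moreover have "\<eta> 0 = (x1, - Pk k x1)" "\<eta> (x1 - x2) = (x2, - Pk k x2)" by (simp_all add: \<eta>_def)
  ultimately show "reach (Yk k) (Dk k) (x1, - Pk k x1) (x2, - Pk k x2)"
    unfolding reach_def using le by (metis diff_ge_0_iff_ge)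
qed

lemma Lk_Splus: "Lk k \<inter> Splus snd = Uk k"
proof -
  have "z \<in> Uk k" if zz: "z \<in> Dk k" "snd z \<ge> 0" for z
  proof -
    obtain x where x: "z = (x, - Pk k x)" "(1 - real k) / 2 \<le> x" "x \<le> (real k - 1) / 2"
      using zz(1) unfolding Dk_def by blast
    have "Pk k x = 0" using Pk_nonneg[OF x(2,3)] zz(2) x(1) by simp
    then show ?thesis using x unfolding Uk_def by auto
  qed
  moreover have "snd z \<ge> 0" if "z \<in> Uk k" for z using that Pk_nonneg unfolding Uk_def by auto
  ultimately show ?thesis unfolding Lk_UD Splus_def by auto
qed

lemma Lk_Sminus: "Lk k \<inter> Sminus snd = Dk k"
proof -
  have "z \<in> Dk k" if zz: "z \<in> Uk k" "snd z \<le> 0" for z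
  proof -
    obtain x where x: "z = (x, Pk k x)" "(1 - real k) / 2 \<le> x" "x \<le> (real k - 1) / 2"
      using zz(1) unfolding Uk_def by blast
    have "Pk k x = 0" using Pk_nonneg[OF x(2,3)] zz(2) x(1) by simp
    then show ?thesis using x unfolding Dk_def by auto
  qed
  moreover have "snd z \<le> 0" if "z \<in> Dk k" for z using that Pk_nonneg unfolding Dk_def by auto
  ultimately show ?thesis unfolding Lk_UD Sminus_def by auto
qed

lemma Lk_Sig:
  assumes "k \<ge> 2"
  shows "Lk k \<inter> Sig snd = (\<lambda>j. (xr k j, 0)) ` {0..k}"
proof -
  have "z \<in> (\<lambda>j. (xr k j, 0)) ` {0..k}" if zz: "z \<in> Lk k" "snd z = 0" for z
  proof -
    obtain x where x: "z = (x, Pk k x) \<or> z = (x, - Pk k x)" "(1 - real k) / 2 \<le> x" "x \<le> (real k - 1) / 2"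
      using zz(1) unfolding Lk_def by blast
    have "Pk k x = 0" using x(1) zz(2) by auto
    then obtain j where "j \<le> k" "x = xr k j" using Pk_zero[OF assms x(2,3)] by blast
    then show ?thesis using x(1) \<open>Pk k x = 0\<close> by auto
  qed
  moreover have "(xr k j, 0) \<in> Lk k" if "j \<le> k" for j
  proof -
    have "Pk k (xr k j) = 0" using Pk_zero[OF assms xr_range[OF assms that]] that by blast
    then show ?thesis unfolding Lk_def using xr_range[OF assms that] by force
  qed
  ultimately show ?thesis unfolding Sig_def by auto
qed


lemma chain_less:
  fixes x :: "nat \<Rightarrow> real"
  assumes "\<forall>j<N. x j < x (Suc j)" "j < l" "l \<le> N"
  shows "x j < x l"
  using assms(2,3)
proof (induction l)
  case 0 then show ?case by simp
next
  case (Suc l)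
  show ?case
  proof (cases "j = l")
    case True then show ?thesis using assms(1) Suc by auto
  next
    case False then have "x j < x l" using Suc by auto
    also have "x l < x (Suc l)" using assms(1) Suc by auto
    finally show ?thesis .
  qed
qed

lemma chain_le:
  fixes x :: "nat \<Rightarrow> real"
  assumes "\<forall>j<N. x j < x (Suc j)" "j \<le> l" "l \<le> N"
  shows "x j \<le> x l"
  using chain_less[OF assms(1)] assms(2,3) by (cases "j = l") (auto intro: less_imp_le)

lemma chain_cover:
  fixes x :: "nat \<Rightarrow> real"
  assumes "\<forall>j<N. x j < x (Suc j)" "x 0 \<le> t" "t \<le> x N"
  shows "\<exists>j\<le>N. t = x j \<or> (j < N \<and> x j < t \<and> t < x (Suc j))"
  using assms(2,3)
proof (induction N)
  case 0 then show ?case by auto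
next
  case (Suc N)
  show ?case
  proof (cases "t \<le> x N")
    case True
    then obtain j where "j \<le> N" "t = x j \<or> (j < N \<and> x j < t \<and> t < x (Suc j))"
      using Suc assms(1) by (metis less_SucI)
    then show ?thesis by (intro exI[of _ j]) auto
  next
    case False
    then show ?thesis using Suc.prems by (cases "t = x (Suc N)") (auto intro: exI[of _ N] exI[of _ "Suc N"])
  qed
qed

lemma interp:
  fixes x y :: "nat \<Rightarrow> real"
  assumes "\<forall>j<N. x j < x (Suc j)" "\<forall>j<N. y j < y (Suc j)"
  shows "\<exists>\<phi>. continuous_on {x 0..x N} \<phi> \<and> (\<forall>s\<in>{x 0..x N}. \<forall>t\<in>{x 0..x N}. s < t \<longrightarrow> \<phi> s < \<phi> t)
     \<and> (\<forall>j\<le>N. \<phi> (x j) = y j)"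
  using assms
proof (induction N)
  case 0
  show ?case by (intro exI[of _ "\<lambda>_. y 0"]) auto
next
  case (Suc N)
  then obtain \<phi> where \<phi>: "continuous_on {x 0..x N} \<phi>"
    "\<forall>s\<in>{x 0..x N}. \<forall>t\<in>{x 0..x N}. s < t \<longrightarrow> \<phi> s < \<phi> t" "\<forall>j\<le>N. \<phi> (x j) = y j"
    by auto
  have xl: "x N < x (Suc N)" "y N < y (Suc N)" using Suc.prems by auto
  have x0N: "x 0 \<le> x N" using chain_le[of N x 0 N] Suc.prems by auto
  define sl where "sl = (y (Suc N) - y N) / (x (Suc N) - x N)"
  have sl: "sl > 0" using xl by (simp add: sl_def)
  define \<psi> where "\<psi> s = (if s \<le> x N then \<phi> s else y N + (s - x N) * sl)" for s
  have cont: "continuous_on {x 0..x (Suc N)} \<psi>"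
    unfolding \<psi>_def
  proof (rule continuous_on_cases_le)
    show "continuous_on {s \<in> {x 0..x (Suc N)}. s \<le> x N} \<phi>"
      by (rule continuous_on_subset[OF \<phi>(1)]) auto
    show "continuous_on {s \<in> {x 0..x (Suc N)}. x N \<le> s} (\<lambda>s. y N + (s - x N) * sl)"
      by (intro continuous_intros)
    show "continuous_on {x 0..x (Suc N)} (\<lambda>s. s)" by (intro continuous_intros)
    show "\<And>s. s \<in> {x 0..x (Suc N)} \<Longrightarrow> s = x N \<Longrightarrow> \<phi> s = y N + (s - x N) * sl"
      using \<phi>(3) by auto
  qed
  have mono: "\<psi> s < \<psi> t" if st: "s \<in> {x 0..x (Suc N)}" "t \<in> {x 0..x (Suc N)}" "s < t" for s t
  proof (cases "t \<le> x N")
    case True then show ?thesis using \<phi>(2) st by (auto simp: \<psi>_def)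
  next
    case tF: False
    show ?thesis
    proof (cases "s \<le> x N")
      case True
      have "\<phi> s \<le> \<phi> (x N)"
      proof (cases "s = x N")
        case False then have "s < x N" using True by simp
        moreover have "s \<in> {x 0..x N}" "x N \<in> {x 0..x N}" using st True x0N by auto
        ultimately show ?thesis using \<phi>(2) by (meson less_imp_le)
      qed simp
      also have "\<dots> = y N" using \<phi>(3) by auto
      also have "y N < y N + (t - x N) * sl" using tF sl by simp
      finally show ?thesis using True tF by (simp add: \<psi>_def)
    next
      case False
      then show ?thesis using tF st sl by (simp add: \<psi>_def)
    qed
  qed
  have vals: "\<psi> (x j) = y j" if "j \<le> Suc N" for j
  proof (cases "j = Suc N")
    case True then show ?thesis using xl by (simp add: \<psi>_def sl_def)
  next
    case False
    then have "j \<le> N" using that by simp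
    then have "x j \<le> x N" using chain_le[of "Suc N" x j N] Suc.prems by auto
    then show ?thesis using \<phi>(3) \<open>j \<le> N\<close> by (simp add: \<psi>_def)
  qed
  show ?case using cont mono vals by blast
qed

lemma sol_unique:
  assumes V: "smooth V" and s1: "sol_in V S1 \<gamma>1 b1 e1" and s2: "sol_in V S2 \<gamma>2 b2 e2"
    and L: "0 \<le> L" "L \<le> e1 - b1" "L \<le> e2 - b2"
    and s0: "s0 \<in> {0..L}" "\<gamma>1 (s0 + b1) = \<gamma>2 (s0 + b2)" and s: "s \<in> {0..L}"
  shows "\<gamma>1 (s + b1) = \<gamma>2 (s + b2)"
proof -
  have "sol_in V S1 (\<lambda>s. \<gamma>1 (s + b1)) (b1 - b1) (e1 - b1)" by (rule sol_in_shift[OF s1])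
  then have u: "sol_in V S1 (\<lambda>s. \<gamma>1 (s + b1)) 0 L" by (rule sol_in_sub) (use L in auto)
  have "sol_in V S2 (\<lambda>s. \<gamma>2 (s + b2)) (b2 - b2) (e2 - b2)" by (rule sol_in_shift[OF s2])
  then have w: "sol_in V S2 (\<lambda>s. \<gamma>2 (s + b2)) 0 L" by (rule sol_in_sub) (use L in auto)
  show ?thesis
    using ode_unique[OF V _ _ s0(1) _ s, of "\<lambda>s. \<gamma>1 (s + b1)" "\<lambda>s. \<gamma>2 (s + b2)"] u w s0(2)
    unfolding sol_in_def by auto
qed

lemma two_arcs_end_aux:
  assumes V: "smooth V" and s1: "sol_in V S1 \<gamma> b1 e1" and s2: "sol_in V S2 \<gamma> b2 e2"
    and lt: "b1 < e1" "b2 < e2" and l: "e1 - b1 \<le> e2 - b2"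
    and sb1: "\<gamma> b1 \<in> Sig f" and av2: "\<forall>s. b2 < s \<and> s < e2 \<longrightarrow> \<gamma> s \<notin> Sig f"
    and ee: "\<gamma> e1 = \<gamma> e2"
  shows "\<gamma> b1 = \<gamma> b2"
proof -
  define L where "L = e1 - b1"
  have s2': "sol_in V S2 \<gamma> (e2 - L) e2" by (rule sol_in_sub[OF s2]) (use l lt in \<open>auto simp: L_def\<close>)
  have "\<gamma> (0 + b1) = \<gamma> (0 + (e2 - L))"
    by (rule sol_unique[OF V s1 s2', of L L]) (use lt ee in \<open>auto simp: L_def\<close>)
  then have eq: "\<gamma> b1 = \<gamma> (e2 - L)" by simp
  have "e2 - L = b2"
  proof (rule ccontr)
    assume "e2 - L \<noteq> b2"
    then have "b2 < e2 - L" "e2 - L < e2" using l lt by (auto simp: L_def)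
    then show False using av2 sb1 eq by metis
  qed
  then show ?thesis using eq by simp
qed

lemma two_arcs_end:
  assumes V: "smooth V" and s1: "sol_in V S1 \<gamma> b1 e1" and s2: "sol_in V S2 \<gamma> b2 e2"
    and lt: "b1 < e1" "b2 < e2"
    and sb: "\<gamma> b1 \<in> Sig f" "\<gamma> b2 \<in> Sig f"
    and av: "\<forall>s. b1 < s \<and> s < e1 \<longrightarrow> \<gamma> s \<notin> Sig f" "\<forall>s. b2 < s \<and> s < e2 \<longrightarrow> \<gamma> s \<notin> Sig f"
    and ee: "\<gamma> e1 = \<gamma> e2"
  shows "\<gamma> b1 = \<gamma> b2"
proof (cases "e1 - b1 \<le> e2 - b2")
  case True show ?thesis by (rule two_arcs_end_aux[OF V s1 s2 lt True sb(1) av(2) ee])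
next
  case False then show ?thesis using two_arcs_end_aux[OF V s2 s1 lt(2,1) _ sb(2) av(1) ee[symmetric]] by auto
qed

lemma two_arcs_start_aux:
  assumes V: "smooth V" and s1: "sol_in V S1 \<gamma> b1 e1" and s2: "sol_in V S2 \<gamma> b2 e2"
    and lt: "b1 < e1" "b2 < e2" and l: "e1 - b1 \<le> e2 - b2"
    and se1: "\<gamma> e1 \<in> Sig f" and av2: "\<forall>s. b2 < s \<and> s < e2 \<longrightarrow> \<gamma> s \<notin> Sig f"
    and bb: "\<gamma> b1 = \<gamma> b2"
  shows "\<gamma> e1 = \<gamma> e2"
proof -
  define L where "L = e1 - b1"
  have "\<gamma> (L + b1) = \<gamma> (L + b2)"
    by (rule sol_unique[OF V s1 s2, of L 0]) (use lt bb l in \<open>auto simp: L_def\<close>)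
  then have eq: "\<gamma> e1 = \<gamma> (b2 + L)" by (simp add: L_def add.commute)
  have "b2 + L = e2"
  proof (rule ccontr)
    assume "b2 + L \<noteq> e2"
    then have "b2 < b2 + L" "b2 + L < e2" using l lt by (auto simp: L_def)
    then show False using av2 se1 eq by metis
  qed
  then show ?thesis using eq by simp
qed

lemma two_arcs_start:
  assumes V: "smooth V" and s1: "sol_in V S1 \<gamma> b1 e1" and s2: "sol_in V S2 \<gamma> b2 e2"
    and lt: "b1 < e1" "b2 < e2"
    and se: "\<gamma> e1 \<in> Sig f" "\<gamma> e2 \<in> Sig f"
    and av: "\<forall>s. b1 < s \<and> s < e1 \<longrightarrow> \<gamma> s \<notin> Sig f" "\<forall>s. b2 < s \<and> s < e2 \<longrightarrow> \<gamma> s \<notin> Sig f"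
    and bb: "\<gamma> b1 = \<gamma> b2"
  shows "\<gamma> e1 = \<gamma> e2"
proof (cases "e1 - b1 \<le> e2 - b2")
  case True show ?thesis by (rule two_arcs_start_aux[OF V s1 s2 lt True se(1) av(2) bb])
next
  case False then show ?thesis using two_arcs_start_aux[OF V s2 s1 lt(2,1) _ se(2) av(1) bb[symmetric]] by auto
qed

lemma sign_const:
  fixes g :: "real \<Rightarrow> real"
  assumes c: "continuous_on {a..b} g" and nz: "\<forall>s\<in>{a<..<b}. g s \<noteq> 0"
    and st: "s \<in> {a<..<b}" "t \<in> {a<..<b}" and pos: "g s > 0"
  shows "g t > 0"
proof (rule ccontr)
  assume "\<not> g t > 0"
  then have gt: "g t < 0" using nz st by force
  show False
  proof (cases "s \<le> t")
    case True
    have "continuous_on {s..t} g" by (rule continuous_on_subset[OF c]) (use st in auto)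
    then obtain z where "z \<in> {s..t}" "g z = 0" using IVT2'[of g t 0 s] gt pos True by auto
    then show False using nz st by force
  next
    case False
    have "continuous_on {t..s} g" by (rule continuous_on_subset[OF c]) (use st in auto)
    then obtain z where "z \<in> {t..s}" "g z = 0" using IVT'[of g t 0 s] gt pos False by auto
    then show False using nz st by force
  qed
qed


definition lab :: "nat \<Rightarrow> nat \<Rightarrow> nat" where
  "lab n j = (if j \<le> n + 1 then j else if j = 2 * n + 2 then 0 else 2 * n + 2 - j)"

locale loopdata =
  fixes X Y :: "pt \<Rightarrow> pt" and f :: "pt \<Rightarrow> real" and \<gamma> :: "real \<Rightarrow> pt" and T :: real
    and \<tau> :: "nat \<Rightarrow> real" and n :: nat and p :: "nat \<Rightarrow> pt"
  assumes smX: "smooth X" and smY: "smooth Y" and smf: "smooth f" and n2: "n \<ge> 2"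
    and gt: "global_traj X Y f \<gamma>" and Tpos: "T > 0" and per: "\<forall>t. \<gamma> (t + T) = \<gamma> t"
    and inc: "\<forall>j\<le>2*n+1. \<tau> j < \<tau> (Suc j)" and tend: "\<tau> (2*n+2) = \<tau> 0 + T"
    and sig: "\<forall>j\<le>2*n+1. \<gamma> (\<tau> j) \<in> Sig f"
    and avoid: "\<forall>j\<le>2*n+1. \<forall>s. \<tau> j < s \<and> s < \<tau> (Suc j) \<longrightarrow> \<gamma> s \<notin> Sig f"
    and cr0: "crossing X Y f (\<gamma> (\<tau> 0))" and cr1: "crossing X Y f (\<gamma> (\<tau> (n+1)))"
    and pts: "\<forall>i\<in>{1..n}. \<gamma> (\<tau> i) = p i \<and> \<gamma> (\<tau> (n+1+i)) = p (n+1-i)"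
    and injp: "inj_on p {1..n}" and vv: "\<forall>i\<in>{1..n}. vv_twofold X Y f (p i)"
begin

abbreviation c where "c j \<equiv> \<gamma> (\<tau> j)"

definition sg :: "nat \<Rightarrow> bool" where
  "sg j = (f (\<gamma> ((\<tau> j + \<tau> (Suc j)) / 2)) > 0)"

lemma inc': "\<forall>j<2*n+2. \<tau> j < \<tau> (Suc j)" using inc by auto

lemma ord: "j < l \<Longrightarrow> l \<le> 2*n+2 \<Longrightarrow> \<tau> j < \<tau> l"
  using chain_less[OF inc'] by blast

lemma ordle: "j \<le> l \<Longrightarrow> l \<le> 2*n+2 \<Longrightarrow> \<tau> j \<le> \<tau> l"
  using chain_le[OF inc'] by blast

lemma cont: "continuous_on UNIV \<gamma>" by (rule global_traj_cont[OF gt])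

lemma fcont: "continuous_on UNIV f"
  using smf unfolding smooth_def by (metis Ck.simps(1))

lemma cper: "c (2*n+2) = c 0" using tend per by simp

lemma sigc: "j \<le> 2*n+2 \<Longrightarrow> f (c j) = 0"
  using sig cper by (cases "j = 2*n+2") (auto simp: Sig_def)

lemma sigc': "j \<le> 2*n+2 \<Longrightarrow> c j \<in> Sig f"
  using sigc by (simp add: Sig_def)

lemma arc_pos:
  assumes j: "j \<le> 2*n+1" and s: "sg j" and t: "t \<in> {\<tau> j<..<\<tau> (Suc j)}"
  shows "f (\<gamma> t) > 0"
proof -
  have c: "continuous_on {\<tau> j..\<tau> (Suc j)} (\<lambda>s. f (\<gamma> s))"
    using cont fcont by (intro continuous_on_compose2[OF fcont] continuous_on_subset[OF cont]) auto
  have nz: "\<forall>s\<in>{\<tau> j<..<\<tau> (Suc j)}. f (\<gamma> s) \<noteq> 0" using avoid j by (auto simp: Sig_def)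
  have m: "(\<tau> j + \<tau> (Suc j)) / 2 \<in> {\<tau> j<..<\<tau> (Suc j)}" using inc j by auto
  show ?thesis by (rule sign_const[OF c nz m t]) (use s in \<open>simp add: sg_def\<close>)
qed

lemma arc_neg:
  assumes j: "j \<le> 2*n+1" and s: "\<not> sg j" and t: "t \<in> {\<tau> j<..<\<tau> (Suc j)}"
  shows "f (\<gamma> t) < 0"
proof -
  have c: "continuous_on {\<tau> j..\<tau> (Suc j)} (\<lambda>s. - f (\<gamma> s))"
    using cont fcont by (intro continuous_intros continuous_on_compose2[OF fcont] continuous_on_subset[OF cont]) auto
  have nz: "\<forall>s\<in>{\<tau> j<..<\<tau> (Suc j)}. - f (\<gamma> s) \<noteq> 0" using avoid j by (auto simp: Sig_def)
  have m: "(\<tau> j + \<tau> (Suc j)) / 2 \<in> {\<tau> j<..<\<tau> (Suc j)}" using inc j by auto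
  have "f (\<gamma> ((\<tau> j + \<tau> (Suc j)) / 2)) \<noteq> 0" using nz m by auto
  then have "- f (\<gamma> ((\<tau> j + \<tau> (Suc j)) / 2)) > 0" using s by (simp add: sg_def)
  from sign_const[OF c nz m t this] show ?thesis by simp
qed

lemma arcX: "j \<le> 2*n+1 \<Longrightarrow> sg j \<Longrightarrow> sol_in X (Splus f) \<gamma> (\<tau> j) (\<tau> (Suc j))"
  using arc_pos inc sigc by (intro arc_sol_pos[OF gt]) auto

lemma arcY: "j \<le> 2*n+1 \<Longrightarrow> \<not> sg j \<Longrightarrow> sol_in Y (Sminus f) \<gamma> (\<tau> j) (\<tau> (Suc j))"
  using arc_neg inc sigc by (intro arc_sol_neg[OF gt]) auto

lemma c_lab: "j \<le> 2*n+2 \<Longrightarrow> c j = c (lab n j)"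
proof -
  assume j: "j \<le> 2*n+2"
  consider "j \<le> n+1" | "j = 2*n+2" | "n+2 \<le> j" "j \<le> 2*n+1" using j by linarith
  then show ?thesis
  proof cases
    case 1 then show ?thesis by (simp add: lab_def)
  next
    case 2 then show ?thesis using cper by (simp add: lab_def)
  next
    case 3
    define i where "i = j - (n+1)"
    have i: "i \<in> {1..n}" "j = n+1+i" using 3 by (auto simp: i_def)
    have "c j = p (n+1-i)" using pts i by auto
    moreover have "n+1-i \<in> {1..n}" using i by auto
    then have "c (n+1-i) = p (n+1-i)" using pts by auto
    moreover have "lab n j = n+1-i" using 3 i by (simp add: lab_def)
    ultimately show ?thesis by simp
  qed
qed

lemma lab_le: "lab n j \<le> n+1" unfolding lab_def by auto

lemma LieX0: "Lie X f (c 0) \<noteq> 0" "Lie Y f (c 0) \<noteq> 0" "Lie X f (c (n+1)) \<noteq> 0" "Lie Y f (c (n+1)) \<noteq> 0"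
  using cr0 cr1 unfolding crossing_def by auto

lemma Liep: "i \<in> {1..n} \<Longrightarrow> Lie X f (c i) = 0 \<and> Lie Y f (c i) = 0"
  using vv pts unfolding vv_twofold_def by auto

lemma cdist:
  assumes "i \<le> n+1" "l \<le> n+1" "c i = c l"
  shows "i = l \<or> (i = 0 \<and> l = n+1) \<or> (i = n+1 \<and> l = 0)"
proof -
  have ends: "i = 0 \<or> i = n+1 \<or> i \<in> {1..n}" "l = 0 \<or> l = n+1 \<or> l \<in> {1..n}" using assms by auto
  have "i = l" if "i \<in> {1..n}" "l \<in> {1..n}"
    using injp pts that assms(3) by (metis inj_on_eq_iff)
  moreover have False if "i \<in> {1..n}" "l = 0 \<or> l = n+1"
    using Liep[OF that(1)] LieX0 that(2) assms(3) by auto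
  moreover have False if "l \<in> {1..n}" "i = 0 \<or> i = n+1"
    using Liep[OF that(1)] LieX0 that(2) assms(3) by auto
  ultimately show ?thesis using ends by blast
qed

lemma arc_field:
  assumes "j \<le> 2*n+1"
  obtains V S where "smooth V" "sol_in V S \<gamma> (\<tau> j) (\<tau> (Suc j))"
      "sg j \<Longrightarrow> V = X" "\<not> sg j \<Longrightarrow> V = Y"
  using arcX[OF assms] arcY[OF assms] smX smY by (cases "sg j") auto

lemma same_sg_end:
  assumes j: "j1 \<le> 2*n+1" "j2 \<le> 2*n+1" and s: "sg j1 = sg j2" and e: "c (Suc j1) = c (Suc j2)"
  shows "c j1 = c j2"
proof -
  have av: "\<forall>s. \<tau> j1 < s \<and> s < \<tau> (Suc j1) \<longrightarrow> \<gamma> s \<notin> Sig f" "\<forall>s. \<tau> j2 < s \<and> s < \<tau> (Suc j2) \<longrightarrow> \<gamma> s \<notin> Sig f"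
    using avoid j by auto
  show ?thesis
  proof (cases "sg j1")
    case True
    then show ?thesis using two_arcs_end[OF smX arcX[OF j(1) True] arcX[OF j(2)] _ _ sigc' sigc' av e] s j inc
      by auto
  next
    case False
    then show ?thesis using two_arcs_end[OF smY arcY[OF j(1) False] arcY[OF j(2)] _ _ sigc' sigc' av e] s j inc
      by auto
  qed
qed

lemma same_sg_start:
  assumes j: "j1 \<le> 2*n+1" "j2 \<le> 2*n+1" and s: "sg j1 = sg j2" and e: "c j1 = c j2"
  shows "c (Suc j1) = c (Suc j2)"
proof -
  have av: "\<forall>s. \<tau> j1 < s \<and> s < \<tau> (Suc j1) \<longrightarrow> \<gamma> s \<notin> Sig f" "\<forall>s. \<tau> j2 < s \<and> s < \<tau> (Suc j2) \<longrightarrow> \<gamma> s \<notin> Sig f"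
    using avoid j by auto
  show ?thesis
  proof (cases "sg j1")
    case True
    then show ?thesis using two_arcs_start[OF smX arcX[OF j(1) True] arcX[OF j(2)] _ _ sigc' sigc' av e] s j inc
      by auto
  next
    case False
    then show ?thesis using two_arcs_start[OF smY arcY[OF j(1) False] arcY[OF j(2)] _ _ sigc' sigc' av e] s j inc
      by auto
  qed
qed

lemma lab_neq:
  assumes "j \<le> 2*n+2" "l \<le> 2*n+2" "c j = c l"
    "lab n j \<noteq> lab n l" "\<not> (lab n j = 0 \<and> lab n l = n+1)" "\<not> (lab n j = n+1 \<and> lab n l = 0)"
  shows False
  using cdist[OF lab_le lab_le, of j l] c_lab[OF assms(1)] c_lab[OF assms(2)] assms(3-6) by auto

lemma pmirror: "i \<in> {1..n} \<Longrightarrow> c (2*n+2-i) = c i"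
proof -
  assume i: "i \<in> {1..n}"
  then have "n+1-i \<in> {1..n}" by auto
  then have "c (n+1+(n+1-i)) = p (n+1-(n+1-i))" using pts by blast
  moreover have "n+1+(n+1-i) = 2*n+2-i" "n+1-(n+1-i) = i" using i by auto
  ultimately show ?thesis using pts i by auto
qed

lemma constr_in:
  assumes i: "i \<in> {1..n}"
  shows "sg (i - 1) \<noteq> sg (2*n+1-i)"
proof
  assume s: "sg (i - 1) = sg (2*n+1-i)"
  have e: "c (Suc (i - 1)) = c (Suc (2*n+1-i))"
    using pmirror[OF i] i by (simp add: Suc_diff_le)
  have "c (i - 1) = c (2*n+1-i)" by (rule same_sg_end[OF _ _ s e]) (use i in auto)
  then show False
    by (rule lab_neq[rotated 2]) (use i n2 in \<open>auto simp: lab_def\<close>)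
qed

lemma constr_out:
  assumes i: "i \<in> {1..n}"
  shows "sg i \<noteq> sg (2*n+2-i)"
proof
  assume s: "sg i = sg (2*n+2-i)"
  have e: "c i = c (2*n+2-i)" using pmirror[OF i] by simp
  have "c (Suc i) = c (Suc (2*n+2-i))" by (rule same_sg_start[OF _ _ s e]) (use i in auto)
  then show False
    by (rule lab_neq[rotated 2]) (use i n2 in \<open>auto simp: lab_def\<close>)
qed

lemma constr_cross: "sg (2*n+1) \<noteq> sg 0"
proof
  assume s: "sg (2*n+1) = sg 0"
  have d1: "\<tau> (2*n+1) < \<tau> (Suc (2*n+1))" "\<tau> 0 < \<tau> 1" using inc by auto
  have e: "c (Suc (2*n+1)) = c 0" using cper by simp
  show False
  proof (cases "sg 0")
    case True
    have a1: "sol_in X (Splus f) \<gamma> (\<tau> (2*n+1)) (\<tau> (Suc (2*n+1)))" using arcX[of "2*n+1"] s True by auto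
    have a0: "sol_in X (Splus f) \<gamma> (\<tau> 0) (\<tau> (Suc 0))" using arcX[of 0] True by auto
    have "Lie X f (c 0) \<le> 0"
    proof -
      have "Lie X f (c (Suc (2*n+1))) \<le> 0"
        by (rule sign_left_ge[OF lie_deriv[OF smf a1] d1(1) sigc])
           (use arc_pos[of "2*n+1"] s True d1 in \<open>auto intro: less_imp_le\<close>)
      then show ?thesis using e by simp
    qed
    moreover have "Lie X f (c 0) \<ge> 0"
      by (rule sign_right_ge[OF lie_deriv[OF smf a0] _ sigc])
         (use arc_pos[of 0] True inc in \<open>auto intro: less_imp_le\<close>)
    ultimately show False using LieX0 by auto
  next
    case False
    have a1: "sol_in Y (Sminus f) \<gamma> (\<tau> (2*n+1)) (\<tau> (Suc (2*n+1)))" using arcY[of "2*n+1"] s False by auto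
    have a0: "sol_in Y (Sminus f) \<gamma> (\<tau> 0) (\<tau> (Suc 0))" using arcY[of 0] False by auto
    have "Lie Y f (c 0) \<ge> 0"
    proof -
      have "Lie Y f (c (Suc (2*n+1))) \<ge> 0"
        by (rule sign_left_le[OF lie_deriv[OF smf a1] d1(1) sigc])
           (use arc_neg[of "2*n+1"] s False d1 in \<open>auto intro: less_imp_le\<close>)
      then show ?thesis using e by simp
    qed
    moreover have "Lie Y f (c 0) \<le> 0"
      by (rule sign_right_le[OF lie_deriv[OF smf a0] _ sigc])
         (use arc_neg[of 0] False inc in \<open>auto intro: less_imp_le\<close>)
    ultimately show False using LieX0 by auto
  qed
qed

lemma propagate: "j \<le> n \<Longrightarrow> sg j = sg 0 \<and> sg (2*n+1-j) \<noteq> sg 0"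
proof (induction j)
  case 0 then show ?case using constr_cross by auto
next
  case (Suc j)
  then have IH: "sg j = sg 0" "sg (2*n+1-j) \<noteq> sg 0" by auto
  have i: "Suc j \<in> {1..n}" using Suc by auto
  have "sg (Suc j) \<noteq> sg (2*n+2-Suc j)" by (rule constr_out[OF i])
  moreover have "2*n+2-Suc j = 2*n+1-j" by simp
  ultimately have 1: "sg (Suc j) = sg 0" using IH by auto
  have "sg (Suc j - 1) \<noteq> sg (2*n+1-Suc j)" by (rule constr_in[OF i])
  then have 2: "sg (2*n+1-Suc j) \<noteq> sg 0" using IH by auto
  show ?case using 1 2 by auto
qed

lemma sign_pattern: "j \<le> 2*n+1 \<Longrightarrow> sg j = (sg 0 = (j \<le> n))"
proof -
  assume j: "j \<le> 2*n+1"
  show ?thesis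
  proof (cases "j \<le> n")
    case True then show ?thesis using propagate[OF True] by simp
  next
    case False
    then have "2*n+1-j \<le> n" "2*n+1-(2*n+1-j) = j" using j by auto
    then show ?thesis using propagate[of "2*n+1-j"] False by simp
  qed
qed

end


context loopdata
begin

definition \<tau>' :: "nat \<Rightarrow> real" where
  "\<tau>' j = (if j \<le> n+1 then \<tau> (j+n+1) else \<tau> (j-n-1) + T)"

definition p' :: "nat \<Rightarrow> pt" where
  "p' i = p (n+1-i)"

lemma tend2: "\<tau> (n+1+n+1) = \<tau> 0 + T"
proof -
  have nn: "n + 1 + n + 1 = 2 * n + 2" by simp
  show ?thesis using tend nn by metis
qed

lemma per_minus: "\<gamma> (s - T) = \<gamma> s"
  using per[rule_format, of "s - T"] by simp

lemma reindex: "loopdata X Y f \<gamma> T \<tau>' n p'"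
proof (unfold_locales)
  show "smooth X" "smooth Y" "smooth f" "2 \<le> n" "global_traj X Y f \<gamma>" "0 < T" "\<forall>t. \<gamma> (t + T) = \<gamma> t"
    using smX smY smf n2 gt Tpos per by auto
  show "\<forall>j\<le>2*n+1. \<tau>' j < \<tau>' (Suc j)"
  proof (intro allI impI)
    fix j assume j: "j \<le> 2*n+1"
    consider "j \<le> n" | "j = n+1" | "n+2 \<le> j" using j by linarith
    then show "\<tau>' j < \<tau>' (Suc j)"
    proof cases
      case 1 then show ?thesis using inc by (auto simp: \<tau>'_def)
    next
      case 2
      have "\<tau> 0 < \<tau> 1" using inc by auto
      have nn: "n + 1 + n + 1 = 2 * n + 2" by simp
      have t2: "\<tau> (n+1+n+1) = \<tau> 0 + T" using tend nn by metis
      have a: "\<tau>' j = \<tau> (n+1+n+1)" using 2 by (simp add: \<tau>'_def)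
      have b: "\<tau>' (Suc j) = \<tau> 1 + T" using 2 by (simp add: \<tau>'_def)
      show ?thesis using a b t2 \<open>\<tau> 0 < \<tau> 1\<close> by simp
    next
      case 3
      then have "j - n - 1 \<le> 2*n+1" "Suc (j - n - 1) = Suc j - n - 1" using j by auto
      then show ?thesis using 3 inc by (auto simp: \<tau>'_def)
    qed
  qed
  show "\<tau>' (2*n+2) = \<tau>' 0 + T" by (simp add: \<tau>'_def)
  show "\<forall>j\<le>2*n+1. \<gamma> (\<tau>' j) \<in> Sig f"
  proof (intro allI impI)
    fix j assume j: "j \<le> 2*n+1"
    show "\<gamma> (\<tau>' j) \<in> Sig f"
    proof (cases "j \<le> n+1")
      case True then show ?thesis using sigc'[of "j+n+1"] by (simp add: \<tau>'_def)
    next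
      case False then show ?thesis using sigc'[of "j-n-1"] j per by (simp add: \<tau>'_def)
    qed
  qed
  show "\<forall>j\<le>2*n+1. \<forall>s. \<tau>' j < s \<and> s < \<tau>' (Suc j) \<longrightarrow> \<gamma> s \<notin> Sig f"
  proof (intro allI impI)
    fix j s assume j: "j \<le> 2*n+1" and s: "\<tau>' j < s \<and> s < \<tau>' (Suc j)"
    consider "j \<le> n" | "j = n+1" | "n+2 \<le> j" using j by linarith
    then show "\<gamma> s \<notin> Sig f"
    proof cases
      case 1
      then have "\<tau> (j+n+1) < s" "s < \<tau> (Suc (j+n+1))" "j+n+1 \<le> 2*n+1" using s by (auto simp: \<tau>'_def)
      then show ?thesis using avoid by blast
    next
      case 2
      then have "\<tau> 0 < s - T" "s - T < \<tau> (Suc 0)" using s tend2 by (auto simp: \<tau>'_def)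
      then have "\<gamma> (s - T) \<notin> Sig f" using avoid by blast
      then show ?thesis using per_minus by simp
    next
      case 3
      then have jj: "j - n - 1 \<le> 2*n+1" "Suc (j - n - 1) = Suc j - n - 1" using j by auto
      then have "\<tau> (j - n - 1) < s - T" "s - T < \<tau> (Suc (j - n - 1))" using s 3 by (auto simp: \<tau>'_def)
      then have "\<gamma> (s - T) \<notin> Sig f" using avoid jj by blast
      then show ?thesis using per_minus by simp
    qed
  qed
  show "crossing X Y f (\<gamma> (\<tau>' 0))" using cr1 by (simp add: \<tau>'_def add.commute)
  show "crossing X Y f (\<gamma> (\<tau>' (n+1)))" using cr0 cper by (simp add: \<tau>'_def mult_2)
  show "\<forall>i\<in>{1..n}. \<gamma> (\<tau>' i) = p' i \<and> \<gamma> (\<tau>' (n+1+i)) = p' (n+1-i)"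
  proof
    fix i assume i: "i \<in> {1..n}"
    have 1: "\<gamma> (\<tau>' i) = p' i" using pts i by (auto simp: \<tau>'_def p'_def add.commute)
    have "\<gamma> (\<tau>' (n+1+i)) = \<gamma> (\<tau> i + T)" using i by (simp add: \<tau>'_def)
    also have "\<dots> = p i" using per pts i by auto
    also have "\<dots> = p' (n+1-i)" using i by (simp add: p'_def)
    finally show "\<gamma> (\<tau>' i) = p' i \<and> \<gamma> (\<tau>' (n+1+i)) = p' (n+1-i)" using 1 by simp
  qed
  show "inj_on p' {1..n}"
  proof (rule inj_onI)
    fix i l assume il: "i \<in> {1..n}" "l \<in> {1..n}" "p' i = p' l"
    then have "n+1-i \<in> {1..n}" "n+1-l \<in> {1..n}" "p (n+1-i) = p (n+1-l)" by (auto simp: p'_def)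
    then have "n+1-i = n+1-l" using injp by (meson inj_onD)
    then show "i = l" using il by auto
  qed
  show "\<forall>i\<in>{1..n}. vv_twofold X Y f (p' i)"
  proof
    fix i assume "i \<in> {1..n}"
    then have "n+1-i \<in> {1..n}" by auto
    then show "vv_twofold X Y f (p' i)" using vv by (simp add: p'_def)
  qed
qed

lemma reindex_sg: "loopdata.sg f \<gamma> \<tau>' 0 = sg (n+1)"
proof -
  interpret L': loopdata X Y f \<gamma> T \<tau>' n p' by (rule reindex)
  show ?thesis unfolding L'.sg_def sg_def by (simp add: \<tau>'_def add.commute)
qed

end

lemma chain_sol:
  assumes "\<forall>j. a \<le> j \<and> j < b \<longrightarrow> sol_in V S \<gamma> (\<tau> j) (\<tau> (Suc j))" "a < b"
  shows "sol_in V S \<gamma> (\<tau> a) (\<tau> b)"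
  using assms
proof (induction b)
  case 0 then show ?case by simp
next
  case (Suc b)
  show ?case
  proof (cases "a = b")
    case True then show ?thesis using Suc.prems by auto
  next
    case False
    then have "sol_in V S \<gamma> (\<tau> a) (\<tau> b)" using Suc by auto
    moreover have "sol_in V S \<gamma> (\<tau> b) (\<tau> (Suc b))" using Suc.prems False by auto
    ultimately show ?thesis by (rule sol_in_concat)
  qed
qed

lemma sol_in_set:
  assumes "sol_in V S \<gamma> a b" "\<forall>t\<in>{a..b}. \<gamma> t \<in> S'"
  shows "sol_in V S' \<gamma> a b"
  using assms unfolding sol_in_def by auto

lemma inj_part:
  assumes V: "smooth V" and s: "sol_in V S \<gamma> A B" and Z: "Z \<subseteq> {A..B}" "B \<in> Z"
    and sZ: "\<forall>s\<in>{A..B}. \<gamma> s \<in> Sig f \<longrightarrow> s \<in> Z" and Zs: "\<forall>s\<in>Z. \<gamma> s \<in> Sig f"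
    and iZ: "inj_on \<gamma> Z"
  shows "inj_on \<gamma> {A..B}"
proof -
  have aux: False if st: "s \<in> {A..B}" "t \<in> {A..B}" "s < t" "\<gamma> s = \<gamma> t" "\<gamma> s \<notin> Sig f" for s t
  proof -
    have s1: "sol_in V S \<gamma> s B" by (rule sol_in_sub[OF s]) (use st in auto)
    have s2: "sol_in V S \<gamma> t B" by (rule sol_in_sub[OF s]) (use st in auto)
    have "\<gamma> ((B - t) + s) = \<gamma> ((B - t) + t)"
      by (rule sol_unique[OF V s1 s2, of "B - t" 0]) (use st in auto)
    then have eq: "\<gamma> (B - t + s) = \<gamma> B" by simp
    have r: "B - t + s \<in> {A..B}" using st by auto
    have "\<gamma> B \<in> Sig f" using Zs Z by auto
    then have "B - t + s \<in> Z" using sZ r eq by auto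
    then have "B - t + s = B" using iZ Z eq by (meson inj_onD)
    then show False using st by simp
  qed
  show ?thesis
  proof (rule inj_onI)
    fix s t assume st: "s \<in> {A..B}" "t \<in> {A..B}" "\<gamma> s = \<gamma> t"
    show "s = t"
    proof (cases "\<gamma> s \<in> Sig f")
      case True
      then have "s \<in> Z" "t \<in> Z" using sZ st by auto
      then show ?thesis using iZ st by (meson inj_onD)
    next
      case False
      then show ?thesis using aux[of s t] aux[of t s] st by force
    qed
  qed
qed

lemma reach_part:
  assumes V: "smooth V" and s: "sol_in V S0 \<gamma> A B" and inj: "inj_on \<gamma> {A..B}"
    and S: "S = \<gamma> ` {A..B}"
    and exit: "\<And>\<eta> s0 T0. s0 < T0 \<Longrightarrow> (\<forall>s\<in>{s0..T0}. (\<eta> has_vector_derivative V (\<eta> s)) (at s within {s0..T0}))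
        \<Longrightarrow> \<eta> s0 = \<gamma> B \<Longrightarrow> \<exists>s\<in>{s0<..T0}. \<eta> s \<notin> S"
    and t: "t1 \<in> {A..B}" "t2 \<in> {A..B}"
  shows "reach V S (\<gamma> t1) (\<gamma> t2) \<longleftrightarrow> t1 \<le> t2"
proof
  assume "reach V S (\<gamma> t1) (\<gamma> t2)"
  then obtain T0 \<eta> where e: "T0 \<ge> 0" "\<eta> 0 = \<gamma> t1" "\<eta> T0 = \<gamma> t2" "sol_in V S \<eta> 0 T0"
    unfolding reach_def by blast
  have sB: "sol_in V S0 \<gamma> t1 B" by (rule sol_in_sub[OF s]) (use t in auto)
  show "t1 \<le> t2"
  proof (cases "T0 \<le> B - t1")
    case True
    have "\<eta> (T0 + 0) = \<gamma> (T0 + t1)"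
      by (rule sol_unique[OF V e(4) sB, of T0 0]) (use True e t in auto)
    then have "\<gamma> t2 = \<gamma> (T0 + t1)" using e by simp
    moreover have "T0 + t1 \<in> {A..B}" using True e t by auto
    ultimately have "t2 = T0 + t1" using inj t by (meson inj_onD)
    then show ?thesis using e by simp
  next
    case False
    define l where "l = B - t1"
    have "\<eta> (l + 0) = \<gamma> (l + t1)"
      by (rule sol_unique[OF V e(4) sB, of l 0]) (use False e t in \<open>auto simp: l_def\<close>)
    then have el: "\<eta> l = \<gamma> B" by (simp add: l_def)
    have d: "\<forall>s\<in>{l..T0}. (\<eta> has_vector_derivative V (\<eta> s)) (at s within {l..T0})"
    proof
      fix s assume "s \<in> {l..T0}"
      moreover have "l \<ge> 0" using t by (simp add: l_def)
      ultimately have "(\<eta> has_vector_derivative V (\<eta> s)) (at s within {0..T0})"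
        using e(4) unfolding sol_in_def by auto
      then show "(\<eta> has_vector_derivative V (\<eta> s)) (at s within {l..T0})"
        by (rule has_vector_derivative_within_subset) (use \<open>l \<ge> 0\<close> in auto)
    qed
    have "l < T0" using False by (simp add: l_def)
    then obtain s where "s \<in> {l<..T0}" "\<eta> s \<notin> S" using exit[OF _ d el] by blast
    moreover have "l \<ge> 0" using t by (simp add: l_def)
    ultimately show ?thesis using e(4) unfolding sol_in_def by auto
  qed
next
  assume le: "t1 \<le> t2"
  have "sol_in V S0 \<gamma> t1 t2" by (rule sol_in_sub[OF s]) (use t le in auto)
  then have "sol_in V S0 (\<lambda>s. \<gamma> (s + t1)) (t1 - t1) (t2 - t1)" by (rule sol_in_shift)
  then have "sol_in V S0 (\<lambda>s. \<gamma> (s + t1)) 0 (t2 - t1)" by simp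
  moreover have "\<forall>s\<in>{0..t2 - t1}. \<gamma> (s + t1) \<in> S" using S t by auto
  ultimately have "sol_in V S (\<lambda>s. \<gamma> (s + t1)) 0 (t2 - t1)" by (rule sol_in_set)
  then show "reach V S (\<gamma> t1) (\<gamma> t2)"
    unfolding reach_def using le by (intro exI[of _ "t2 - t1"]) (auto intro!: exI[of _ "\<lambda>s. \<gamma> (s + t1)"])
qed

lemma exit_pos:
  assumes f: "smooth f" and L: "Lie V f z < 0" and S: "S \<subseteq> Splus f" and z: "f z = 0"
    and st: "s0 < T0" and d: "\<forall>s\<in>{s0..T0}. (\<eta> has_vector_derivative V (\<eta> s)) (at s within {s0..T0})"
    and e: "\<eta> s0 = z"
  shows "\<exists>s\<in>{s0<..T0}. \<eta> s \<notin> S"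
proof (rule ccontr)
  assume "\<not> ?thesis"
  then have "\<forall>s\<in>{s0<..<T0}. f (\<eta> s) \<ge> 0" using S by (auto simp: Splus_def)
  moreover have "((\<lambda>s. f (\<eta> s)) has_real_derivative Lie V f z) (at s0 within {s0..T0})"
    using comp_deriv[OF f, of \<eta> "V (\<eta> s0)" s0 "{s0..T0}"] d st e by (auto simp: Lie_def)
  ultimately have "Lie V f z \<ge> 0" using sign_right_ge st e z by blast
  then show False using L by simp
qed

lemma exit_neg:
  assumes f: "smooth f" and L: "Lie V f z > 0" and S: "S \<subseteq> Sminus f" and z: "f z = 0"
    and st: "s0 < T0" and d: "\<forall>s\<in>{s0..T0}. (\<eta> has_vector_derivative V (\<eta> s)) (at s within {s0..T0})"
    and e: "\<eta> s0 = z"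
  shows "\<exists>s\<in>{s0<..T0}. \<eta> s \<notin> S"
proof (rule ccontr)
  assume "\<not> ?thesis"
  then have "\<forall>s\<in>{s0<..<T0}. f (\<eta> s) \<le> 0" using S by (auto simp: Sminus_def)
  moreover have "((\<lambda>s. f (\<eta> s)) has_real_derivative Lie V f z) (at s0 within {s0..T0})"
    using comp_deriv[OF f, of \<eta> "V (\<eta> s0)" s0 "{s0..T0}"] d st e by (auto simp: Lie_def)
  ultimately have "Lie V f z \<le> 0" using sign_right_le st e z by blast
  then show False using L by simp
qed


locale loopX = loopdata +
  assumes sg0: "sg 0"
begin

lemma sgX: "j \<le> n \<Longrightarrow> sg j" using sign_pattern[of j] sg0 by auto
lemma sgY: "n+1 \<le> j \<Longrightarrow> j \<le> 2*n+1 \<Longrightarrow> \<not> sg j" using sign_pattern[of j] sg0 by auto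

lemma solX: "sol_in X (Splus f) \<gamma> (\<tau> 0) (\<tau> (n+1))"
  by (rule chain_sol) (use arcX sgX in auto)

lemma solY: "sol_in Y (Sminus f) \<gamma> (\<tau> (n+1)) (\<tau> (2*n+2))"
  by (rule chain_sol) (use arcY sgY in auto)

lemma LieX1: "Lie X f (c (n+1)) < 0"
proof -
  have a: "sol_in X (Splus f) \<gamma> (\<tau> n) (\<tau> (Suc n))" using arcX sgX by auto
  have d: "\<tau> n < \<tau> (Suc n)" using inc by auto
  have "Lie X f (c (Suc n)) \<le> 0"
    by (rule sign_left_ge[OF lie_deriv[OF smf a] d sigc])
       (use arc_pos[of n] sgX d in \<open>auto intro: less_imp_le\<close>)
  then show ?thesis using LieX0 by (simp add: le_less)
qed

lemma LieX0pos: "Lie X f (c 0) \<ge> 0"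
proof -
  have a: "sol_in X (Splus f) \<gamma> (\<tau> 0) (\<tau> (Suc 0))" using arcX sgX by auto
  have d: "\<tau> 0 < \<tau> (Suc 0)" using inc by auto
  show ?thesis
    by (rule sign_right_ge[OF lie_deriv[OF smf a] d sigc])
       (use arc_pos[of 0] sgX d in \<open>auto intro: less_imp_le\<close>)
qed

lemma LieY0: "Lie Y f (c 0) > 0"
proof -
  have a: "sol_in Y (Sminus f) \<gamma> (\<tau> (2*n+1)) (\<tau> (Suc (2*n+1)))" using arcY sgY by auto
  have d: "\<tau> (2*n+1) < \<tau> (Suc (2*n+1))" using inc by auto
  have "Lie Y f (c (Suc (2*n+1))) \<ge> 0"
    by (rule sign_left_le[OF lie_deriv[OF smf a] d sigc])
       (use arc_neg[of "2*n+1"] sgY d in \<open>auto intro: less_imp_le\<close>)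
  then show ?thesis using LieX0 cper by (simp add: le_less)
qed

lemma q01: "c 0 \<noteq> c (n+1)" using LieX1 LieX0pos by auto

lemma cinj:
  assumes "i \<le> n+1" "l \<le> n+1" "c i = c l"
  shows "i = l"
proof -
  have "i = l \<or> (i = 0 \<and> l = n+1) \<or> (i = n+1 \<and> l = 0)" by (rule cdist[OF assms])
  then show ?thesis using q01 assms(3) by auto
qed

lemma sigtimes:
  assumes t: "t \<in> {\<tau> 0..\<tau> (2*n+2)}" "\<gamma> t \<in> Sig f"
  shows "\<exists>j\<le>2*n+2. t = \<tau> j"
proof -
  obtain j where j: "j \<le> 2*n+2" "t = \<tau> j \<or> (j < 2*n+2 \<and> \<tau> j < t \<and> t < \<tau> (Suc j))"
    using chain_cover[OF inc', of t] t by auto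
  show ?thesis
  proof (cases "t = \<tau> j")
    case True then show ?thesis using j by auto
  next
    case False
    then have "j \<le> 2*n+1" "\<tau> j < t" "t < \<tau> (Suc j)" using j by auto
    then show ?thesis using avoid t(2) by blast
  qed
qed

lemma per_nat: "\<gamma> (t + real m * T) = \<gamma> t"
proof (induction m arbitrary: t)
  case 0 then show ?case by simp
next
  case (Suc m)
  have "\<gamma> (t + real (Suc m) * T) = \<gamma> ((t + real m * T) + T)" by (simp add: algebra_simps)
  also have "\<dots> = \<gamma> (t + real m * T)" using per by blast
  finally show ?case using Suc by simp
qed

lemma range_eq: "range \<gamma> = \<gamma> ` {\<tau> 0..\<tau> (2*n+2)}"
proof
  show "\<gamma> ` {\<tau> 0..\<tau> (2*n+2)} \<subseteq> range \<gamma>" by auto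
  show "range \<gamma> \<subseteq> \<gamma> ` {\<tau> 0..\<tau> (2*n+2)}"
  proof
    fix z assume "z \<in> range \<gamma>"
    then obtain t where z: "z = \<gamma> t" by auto
    define k where "k = \<lfloor>(t - \<tau> 0) / T\<rfloor>"
    define t' where "t' = t - real_of_int k * T"
    have "real_of_int k \<le> (t - \<tau> 0) / T" "(t - \<tau> 0) / T < real_of_int k + 1"
      unfolding k_def by linarith+
    then have "real_of_int k * T \<le> t - \<tau> 0" "t - \<tau> 0 < (real_of_int k + 1) * T"
      using Tpos by (auto simp: field_simps)
    then have t': "\<tau> 0 \<le> t'" "t' \<le> \<tau> 0 + T" unfolding t'_def by (auto simp: algebra_simps)
    have "\<gamma> t = \<gamma> t'"
    proof (cases "k \<ge> 0")
      case True
      then have "t = t' + real (nat k) * T" unfolding t'_def by simp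
      then show ?thesis using per_nat by metis
    next
      case False
      then have "t' = t + real (nat (- k)) * T" unfolding t'_def by simp
      then show ?thesis using per_nat by metis
    qed
    then show "z \<in> \<gamma> ` {\<tau> 0..\<tau> (2*n+2)}" using z t' tend by auto
  qed
qed

lemma rS: "range \<gamma> \<inter> Splus f = \<gamma> ` {\<tau> 0..\<tau> (n+1)}"
proof
  show "\<gamma> ` {\<tau> 0..\<tau> (n+1)} \<subseteq> range \<gamma> \<inter> Splus f" using solX unfolding sol_in_def by auto
  show "range \<gamma> \<inter> Splus f \<subseteq> \<gamma> ` {\<tau> 0..\<tau> (n+1)}"
  proof
    fix z assume "z \<in> range \<gamma> \<inter> Splus f"
    then obtain t where t: "t \<in> {\<tau> 0..\<tau> (2*n+2)}" "z = \<gamma> t" "f (\<gamma> t) \<ge> 0"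
      using range_eq by (auto simp: Splus_def)
    show "z \<in> \<gamma> ` {\<tau> 0..\<tau> (n+1)}"
    proof (cases "t \<le> \<tau> (n+1)")
      case True then show ?thesis using t by auto
    next
      case False
      obtain j where j: "j \<le> 2*n+2" "t = \<tau> j \<or> (j < 2*n+2 \<and> \<tau> j < t \<and> t < \<tau> (Suc j))"
        using chain_cover[OF inc', of t] t by auto
      show ?thesis
      proof (cases "t = \<tau> j")
        case True
        then have "z = c (lab n j)" using c_lab[OF j(1)] t by simp
        moreover have "\<tau> (lab n j) \<in> {\<tau> 0..\<tau> (n+1)}"
        proof -
          have "lab n j \<le> n+1" by (rule lab_le)
          then show ?thesis using ordle[of 0 "lab n j"] ordle[of "lab n j" "n+1"] by auto
        qed
        ultimately show ?thesis by auto
      next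
        case tF: False
        then have jj: "j < 2*n+2" "\<tau> j < t" "t < \<tau> (Suc j)" using j by auto
        have "n+1 \<le> j"
        proof (rule ccontr)
          assume "\<not> n+1 \<le> j"
          then have "Suc j \<le> n+1" by simp
          then have "\<tau> (Suc j) \<le> \<tau> (n+1)" using ordle by simp
          then show False using jj False by simp
        qed
        then have "f (\<gamma> t) < 0" using arc_neg[of j t] sgY[of j] jj by auto
        then show ?thesis using t by simp
      qed
    qed
  qed
qed

lemma cmirror: "j \<le> n \<Longrightarrow> c j = c (2*n+2-j)"
  using pmirror cper by (cases "j = 0") auto

lemma rM: "range \<gamma> \<inter> Sminus f = \<gamma> ` {\<tau> (n+1)..\<tau> (2*n+2)}"
proof
  show "\<gamma> ` {\<tau> (n+1)..\<tau> (2*n+2)} \<subseteq> range \<gamma> \<inter> Sminus f" using solY unfolding sol_in_def by auto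
  show "range \<gamma> \<inter> Sminus f \<subseteq> \<gamma> ` {\<tau> (n+1)..\<tau> (2*n+2)}"
  proof
    fix z assume "z \<in> range \<gamma> \<inter> Sminus f"
    then obtain t where t: "t \<in> {\<tau> 0..\<tau> (2*n+2)}" "z = \<gamma> t" "f (\<gamma> t) \<le> 0"
      using range_eq by (auto simp: Sminus_def)
    show "z \<in> \<gamma> ` {\<tau> (n+1)..\<tau> (2*n+2)}"
    proof (cases "\<tau> (n+1) \<le> t")
      case True then show ?thesis using t by auto
    next
      case False
      obtain j where j: "j \<le> 2*n+2" "t = \<tau> j \<or> (j < 2*n+2 \<and> \<tau> j < t \<and> t < \<tau> (Suc j))"
        using chain_cover[OF inc', of t] t by auto
      have jn: "j \<le> n"
      proof (rule ccontr)
        assume "\<not> j \<le> n"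
        then have "\<tau> (n+1) \<le> \<tau> j" using ordle j by simp
        then show False using j False by auto
      qed
      show ?thesis
      proof (cases "t = \<tau> j")
        case True
        then have "z = c (2*n+2-j)" using cmirror[OF jn] t by simp
        moreover have "\<tau> (2*n+2-j) \<in> {\<tau> (n+1)..\<tau> (2*n+2)}" using ordle[of "n+1" "2*n+2-j"] ordle[of "2*n+2-j" "2*n+2"] jn by auto
        ultimately show ?thesis by auto
      next
        case tF: False
        then have jj: "\<tau> j < t" "t < \<tau> (Suc j)" using j by auto
        have "f (\<gamma> t) > 0" using arc_pos[of j t] sgX[OF jn] jj jn by auto
        then show ?thesis using t by simp
      qed
    qed
  qed
qed

lemma rSig: "range \<gamma> \<inter> Sig f = c ` {0..n+1}"
proof
  show "c ` {0..n+1} \<subseteq> range \<gamma> \<inter> Sig f" using sigc' by auto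
  show "range \<gamma> \<inter> Sig f \<subseteq> c ` {0..n+1}"
  proof
    fix z assume "z \<in> range \<gamma> \<inter> Sig f"
    then obtain t where t: "t \<in> {\<tau> 0..\<tau> (2*n+2)}" "z = \<gamma> t" "\<gamma> t \<in> Sig f"
      using range_eq by auto
    obtain j where "j \<le> 2*n+2" "t = \<tau> j" using sigtimes t by blast
    then have "z = c (lab n j)" using c_lab t by simp
    then show "z \<in> c ` {0..n+1}" using lab_le by auto
  qed
qed

lemma rSlide: "range \<gamma> \<inter> slide_esc X Y f = {}"
proof -
  have "z \<notin> slide_esc X Y f" if zin: "z \<in> c ` {0..n+1}" for z
  proof -
    obtain j where j: "j \<le> n+1" "z = c j" using zin by auto
    have "Lie X f z * Lie Y f z \<ge> 0"
    proof (cases "j = 0 \<or> j = n+1")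
      case True then show ?thesis using cr0 cr1 j unfolding crossing_def by auto
    next
      case False then have "j \<in> {1..n}" using j by auto
      then show ?thesis using Liep j by auto
    qed
    then show ?thesis unfolding slide_esc_def
      using mult_neg_pos[of "Lie X f z" "Lie Y f z"] mult_pos_neg[of "Lie X f z" "Lie Y f z"] by auto
  qed
  moreover have "slide_esc X Y f \<subseteq> Sig f" unfolding slide_esc_def by auto
  ultimately show ?thesis using rSig by blast
qed

lemma injX: "inj_on \<gamma> {\<tau> 0..\<tau> (n+1)}"
proof (rule inj_part[OF smX solX, of "\<tau> ` {0..n+1}" f])
  show "\<tau> ` {0..n+1} \<subseteq> {\<tau> 0..\<tau> (n+1)}" using ordle by auto
  show "\<tau> (n+1) \<in> \<tau> ` {0..n+1}" by auto
  show "\<forall>s\<in>{\<tau> 0..\<tau> (n+1)}. \<gamma> s \<in> Sig f \<longrightarrow> s \<in> \<tau> ` {0..n+1}"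
  proof (intro ballI impI)
    fix s assume s: "s \<in> {\<tau> 0..\<tau> (n+1)}" "\<gamma> s \<in> Sig f"
    have "\<tau> (n+1) \<le> \<tau> (2*n+2)" using ordle by simp
    then obtain j where j: "j \<le> 2*n+2" "s = \<tau> j" using sigtimes[of s] s by auto
    have "j \<le> n+1"
    proof (rule ccontr)
      assume "\<not> j \<le> n+1" then have "\<tau> (n+1) < \<tau> j" using ord j by simp
      then show False using s j by simp
    qed
    then show "s \<in> \<tau> ` {0..n+1}" using j by auto
  qed
  show "\<forall>s\<in>\<tau> ` {0..n+1}. \<gamma> s \<in> Sig f" using sigc' by auto
  show "inj_on \<gamma> (\<tau> ` {0..n+1})"
  proof (rule inj_onI)
    fix x y assume xy: "x \<in> \<tau> ` {0..n+1}" "y \<in> \<tau> ` {0..n+1}" "\<gamma> x = \<gamma> y"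
    then obtain i l where il: "i \<in> {0..n+1}" "l \<in> {0..n+1}" "x = \<tau> i" "y = \<tau> l" by auto
    then have "i = l" using cinj[of i l] xy by auto
    then show "x = y" using il by simp
  qed
qed

lemma lab_inj: "n+1 \<le> i \<Longrightarrow> i \<le> 2*n+2 \<Longrightarrow> n+1 \<le> l \<Longrightarrow> l \<le> 2*n+2 \<Longrightarrow> lab n i = lab n l \<Longrightarrow> i = l"
  unfolding lab_def by (auto split: if_splits)

lemma injY: "inj_on \<gamma> {\<tau> (n+1)..\<tau> (2*n+2)}"
proof (rule inj_part[OF smY solY, of "\<tau> ` {n+1..2*n+2}" f])
  show "\<tau> ` {n+1..2*n+2} \<subseteq> {\<tau> (n+1)..\<tau> (2*n+2)}" using ordle by auto
  show "\<tau> (2*n+2) \<in> \<tau> ` {n+1..2*n+2}" by auto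
  show "\<forall>s\<in>{\<tau> (n+1)..\<tau> (2*n+2)}. \<gamma> s \<in> Sig f \<longrightarrow> s \<in> \<tau> ` {n+1..2*n+2}"
  proof (intro ballI impI)
    fix s assume s: "s \<in> {\<tau> (n+1)..\<tau> (2*n+2)}" "\<gamma> s \<in> Sig f"
    have "\<tau> 0 \<le> \<tau> (n+1)" using ordle by simp
    then obtain j where j: "j \<le> 2*n+2" "s = \<tau> j" using sigtimes[of s] s by auto
    have "n+1 \<le> j"
    proof (rule ccontr)
      assume "\<not> n+1 \<le> j" then have "\<tau> j < \<tau> (n+1)" using ord j by simp
      then show False using s j by simp
    qed
    then show "s \<in> \<tau> ` {n+1..2*n+2}" using j by auto
  qed
  show "\<forall>s\<in>\<tau> ` {n+1..2*n+2}. \<gamma> s \<in> Sig f" using sigc' by auto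
  show "inj_on \<gamma> (\<tau> ` {n+1..2*n+2})"
  proof (rule inj_onI)
    fix x y assume xy: "x \<in> \<tau> ` {n+1..2*n+2}" "y \<in> \<tau> ` {n+1..2*n+2}" "\<gamma> x = \<gamma> y"
    then obtain i l where il: "i \<in> {n+1..2*n+2}" "l \<in> {n+1..2*n+2}" "x = \<tau> i" "y = \<tau> l" by auto
    then have "c (lab n i) = c (lab n l)" using c_lab xy by auto
    then have "lab n i = lab n l" using cinj lab_le by blast
    then have "i = l" using lab_inj il by auto
    then show "x = y" using il by simp
  qed
qed

lemma reachX:
  assumes "t1 \<in> {\<tau> 0..\<tau> (n+1)}" "t2 \<in> {\<tau> 0..\<tau> (n+1)}"
  shows "reach X (range \<gamma> \<inter> Splus f) (\<gamma> t1) (\<gamma> t2) \<longleftrightarrow> t1 \<le> t2"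
proof (rule reach_part[OF smX solX injX rS _ assms])
  fix \<eta> s0 T0
  assume "s0 < T0" "\<forall>s\<in>{s0..T0}. (\<eta> has_vector_derivative X (\<eta> s)) (at s within {s0..T0})" "\<eta> s0 = \<gamma> (\<tau> (n+1))"
  then show "\<exists>s\<in>{s0<..T0}. \<eta> s \<notin> range \<gamma> \<inter> Splus f"
    using exit_pos[OF smf LieX1, of "range \<gamma> \<inter> Splus f"] sigc[of "n+1"] by auto
qed

lemma reachY:
  assumes "t1 \<in> {\<tau> (n+1)..\<tau> (2*n+2)}" "t2 \<in> {\<tau> (n+1)..\<tau> (2*n+2)}"
  shows "reach Y (range \<gamma> \<inter> Sminus f) (\<gamma> t1) (\<gamma> t2) \<longleftrightarrow> t1 \<le> t2"
proof (rule reach_part[OF smY solY injY rM _ assms])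
  fix \<eta> s0 T0
  assume "s0 < T0" "\<forall>s\<in>{s0..T0}. (\<eta> has_vector_derivative Y (\<eta> s)) (at s within {s0..T0})" "\<eta> s0 = \<gamma> (\<tau> (2*n+2))"
  moreover have "Lie Y f (c (2*n+2)) > 0" using LieY0 cper by simp
  ultimately show "\<exists>s\<in>{s0<..T0}. \<eta> s \<notin> range \<gamma> \<inter> Sminus f"
    using exit_neg[OF smf, of Y "c (2*n+2)" "range \<gamma> \<inter> Sminus f"] sigc[of "2*n+2"] by auto
qed

end


lemma mono_le_iff:
  fixes S :: "real set"
  assumes mono: "\<forall>s\<in>S. \<forall>t\<in>S. s < t \<longrightarrow> (\<phi> s :: real) < \<phi> t" and st: "s \<in> S" "t \<in> S"
  shows "s \<le> t \<longleftrightarrow> \<phi> s \<le> \<phi> t"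
proof
  assume "s \<le> t"
  then show "\<phi> s \<le> \<phi> t" using mono st by (cases "s = t") (auto intro: less_imp_le)
next
  assume "\<phi> s \<le> \<phi> t"
  then show "s \<le> t" using mono st by (meson not_le)
qed

lemma mono_inj:
  fixes S :: "real set"
  assumes mono: "\<forall>s\<in>S. \<forall>t\<in>S. s < t \<longrightarrow> (\<phi> s :: real) < \<phi> t"
  shows "inj_on \<phi> S"
proof (rule inj_onI)
  fix s t assume st: "s \<in> S" "t \<in> S" "\<phi> s = \<phi> t"
  show "s = t"
  proof (rule ccontr)
    assume "s \<noteq> t"
    then have "s < t \<or> t < s" by auto
    then show False using mono st by force
  qed
qed

lemma mono_image:
  fixes \<phi> :: "real \<Rightarrow> real"
  assumes c: "continuous_on {a..b} \<phi>" and mono: "\<forall>s\<in>{a..b}. \<forall>t\<in>{a..b}. s < t \<longrightarrow> \<phi> s < \<phi> t"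
    and ab: "a \<le> b"
  shows "\<phi> ` {a..b} = {\<phi> a..\<phi> b}"
proof
  show "\<phi> ` {a..b} \<subseteq> {\<phi> a..\<phi> b}"
  proof
    fix y assume "y \<in> \<phi> ` {a..b}"
    then obtain s where s: "s \<in> {a..b}" "y = \<phi> s" by auto
    have "\<phi> a \<le> \<phi> s" "\<phi> s \<le> \<phi> b" using mono_le_iff[OF mono, of a s] mono_le_iff[OF mono, of s b] s ab by auto
    then show "y \<in> {\<phi> a..\<phi> b}" using s by auto
  qed
  show "{\<phi> a..\<phi> b} \<subseteq> \<phi> ` {a..b}"
  proof
    fix y assume "y \<in> {\<phi> a..\<phi> b}"
    then obtain s where "s \<in> {a..b}" "\<phi> s = y" using IVT'[of \<phi> a y b] ab c by auto
    then show "y \<in> \<phi> ` {a..b}" by auto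
  qed
qed

context loopX
begin

lemma sig_time_X:
  assumes "t \<in> {\<tau> 0..\<tau> (n+1)}" "\<gamma> t \<in> Sig f"
  shows "\<exists>j\<le>n+1. t = \<tau> j"
proof -
  have "\<tau> (n+1) \<le> \<tau> (2*n+2)" using ordle by simp
  then obtain j where j: "j \<le> 2*n+2" "t = \<tau> j" using sigtimes[of t] assms by auto
  have "j \<le> n+1"
  proof (rule ccontr)
    assume "\<not> j \<le> n+1" then have "\<tau> (n+1) < \<tau> j" using ord j by simp
    then show False using assms j by simp
  qed
  then show ?thesis using j by auto
qed

lemma sig_time_Y:
  assumes "t \<in> {\<tau> (n+1)..\<tau> (2*n+2)}" "\<gamma> t \<in> Sig f"
  shows "\<exists>i\<le>n+1. t = \<tau> (2*n+2-i)"
proof -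
  have "\<tau> 0 \<le> \<tau> (n+1)" using ordle by simp
  then obtain j where j: "j \<le> 2*n+2" "t = \<tau> j" using sigtimes[of t] assms by auto
  have "n+1 \<le> j"
  proof (rule ccontr)
    assume "\<not> n+1 \<le> j" then have "\<tau> j < \<tau> (n+1)" using ord j by simp
    then show False using assms j by simp
  qed
  then have "j = 2*n+2-(2*n+2-j)" "2*n+2-j \<le> n+1" using j by auto
  then show ?thesis using j by metis
qed

lemma cmirror2: "j \<le> n+1 \<Longrightarrow> c (2*n+2-j) = c j"
  using cmirror[of j] by (cases "j = n+1") (auto simp: mult_2)

theorem main: "sigma_equiv (Xk (n+1)) (Yk (n+1)) snd (Lk (n+1)) X Y f (range \<gamma>)"
proof -
  define K where "K = n+1"
  have K2: "K \<ge> 2" using n2 by (simp add: K_def)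
  define I where "I = {xr K 0..xr K K}"
  have Ieq: "xr K 0 = (1 - real K) / 2" "xr K K = (real K - 1) / 2" using xr_ends[of K] K2 by auto
  have xinc: "\<forall>j<K. xr K j < xr K (Suc j)" using xr_mono[OF K2] by auto
  have tinc: "\<forall>j<K. \<tau> j < \<tau> (Suc j)" using inc by (auto simp: K_def)
  obtain \<phi>U where \<phi>U: "continuous_on {xr K 0..xr K K} \<phi>U"
      "\<forall>s\<in>{xr K 0..xr K K}. \<forall>t\<in>{xr K 0..xr K K}. s < t \<longrightarrow> \<phi>U s < \<phi>U t"
      "\<forall>j\<le>K. \<phi>U (xr K j) = \<tau> j"
    using interp[OF xinc tinc] by blast
  define x' where "x' j = - xr K (K - j)" for j
  define y' where "y' j = \<tau> (K + j)" for j
  have xinc': "\<forall>j<K. x' j < x' (Suc j)"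
    unfolding x'_def using xr_mono[OF K2] by (auto simp: Suc_diff_Suc)
  have tinc': "\<forall>j<K. y' j < y' (Suc j)" unfolding y'_def using inc by (auto simp: K_def)
  obtain \<phi>D' where \<phi>D': "continuous_on {x' 0..x' K} \<phi>D'"
      "\<forall>s\<in>{x' 0..x' K}. \<forall>t\<in>{x' 0..x' K}. s < t \<longrightarrow> \<phi>D' s < \<phi>D' t"
      "\<forall>j\<le>K. \<phi>D' (x' j) = y' j"
    using interp[OF xinc' tinc'] by blast
  have x'e: "x' 0 = xr K 0" "x' K = xr K K" using Ieq by (auto simp: x'_def field_simps)
  define a0 where "a0 = xr K 0"
  define aK where "aK = xr K K"
  have a0K: "a0 < aK" using xr_mono[OF K2, of 0 K] K2 by (simp add: a0_def aK_def)
  have asym: "a0 = - aK" using Ieq by (simp add: a0_def aK_def field_simps)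
  have Idef: "I = {a0..aK}" by (simp add: I_def a0_def aK_def)
  have negI: "- x \<in> I" if "x \<in> I" for x using that asym by (auto simp: Idef)
  have xrI: "xr K j \<in> I" if "j \<le> K" for j using xr_range[OF K2 that] Ieq by (simp add: I_def)
  have KK: "2*n+2 = K + K" by (simp add: K_def)
  have K1: "n+1 = K" by (simp add: K_def)
  note rS' = rS[unfolded K1]
  note rM' = rM[unfolded KK K1]
  note injX' = injX[unfolded K1]
  note injY' = injY[unfolded KK K1]
  note stX = sig_time_X[unfolded K1]
  note stY = sig_time_Y[unfolded KK K1]
  note cm2 = cmirror2[unfolded KK K1]
  note cinj' = cinj[unfolded K1]
  note ordle' = ordle[unfolded KK]
  note range_eq' = range_eq[unfolded KK]
  have U2: "\<phi>U ` I = {\<tau> 0..\<tau> K}"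
    using mono_image[OF \<phi>U(1,2)] a0K \<phi>U(3) K2 by (simp add: I_def a0_def aK_def)
  have U1: "\<phi>U x \<in> {\<tau> 0..\<tau> K}" if "x \<in> I" for x using U2 that by auto
  have U3: "x1 \<le> x2 \<longleftrightarrow> \<phi>U x1 \<le> \<phi>U x2" if "x1 \<in> I" "x2 \<in> I" for x1 x2
    using mono_le_iff[OF \<phi>U(2), of x1 x2] that unfolding I_def by blast
  have U4: "inj_on \<phi>U I" using mono_inj[OF \<phi>U(2)] unfolding I_def .
  have U5: "x = xr K j" if "x \<in> I" "j \<le> K" "\<phi>U x = \<tau> j" for x j
    using U4 that xrI[OF that(2)] \<phi>U(3) by (metis inj_on_eq_iff)
  define \<phi>D where "\<phi>D x = \<phi>D' (- x)" for x
  have x'I: "{x' 0..x' K} = I" using x'e by (simp add: I_def)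
  have v: "\<phi>D' (x' 0) = \<tau> K" "\<phi>D' (x' K) = \<tau> (K + K)"
    using \<phi>D'(3)[rule_format, of 0] \<phi>D'(3)[rule_format, of K] by (auto simp: y'_def)
  have "x' 0 \<le> x' K" using x'e a0K by (simp add: a0_def aK_def)
  then have D'2: "\<phi>D' ` I = {\<tau> K..\<tau> (K + K)}"
    using mono_image[OF \<phi>D'(1,2)] v x'I by simp
  have imneg: "uminus ` I = I" using negI by (auto intro!: image_eqI[where x="- _"])
  have D2: "\<phi>D ` I = {\<tau> K..\<tau> (K + K)}"
  proof -
    have "\<phi>D ` I = \<phi>D' ` (uminus ` I)" by (auto simp: \<phi>D_def image_iff)
    then show ?thesis using imneg D'2 by simp
  qed
  have D1: "\<phi>D x \<in> {\<tau> K..\<tau> (K + K)}" if "x \<in> I" for x using D2 that by auto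
  have D3: "x2 \<le> x1 \<longleftrightarrow> \<phi>D x1 \<le> \<phi>D x2" if "x1 \<in> I" "x2 \<in> I" for x1 x2
  proof -
    have "- x1 \<in> {x' 0..x' K}" "- x2 \<in> {x' 0..x' K}" using negI that x'I by auto
    then have "- x1 \<le> - x2 \<longleftrightarrow> \<phi>D' (- x1) \<le> \<phi>D' (- x2)"
      using mono_le_iff[OF \<phi>D'(2), of "- x1" "- x2"] by blast
    then show ?thesis by (simp add: \<phi>D_def)
  qed
  have D4: "inj_on \<phi>D I"
  proof (rule inj_onI)
    fix s t assume "s \<in> I" "t \<in> I" "\<phi>D s = \<phi>D t"
    moreover have "- s \<in> {x' 0..x' K}" "- t \<in> {x' 0..x' K}" using negI \<open>s \<in> I\<close> \<open>t \<in> I\<close> x'I by auto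
    ultimately have "- s = - t" using mono_inj[OF \<phi>D'(2)] unfolding \<phi>D_def by (meson inj_on_eq_iff)
    then show "s = t" by simp
  qed
  have D5: "\<phi>D (xr K i) = \<tau> (K + K - i)" if "i \<le> K" for i
  proof -
    have "- xr K i = x' (K - i)" using that by (simp add: x'_def)
    then have "\<phi>D (xr K i) = y' (K - i)" using \<phi>D'(3) that by (simp add: \<phi>D_def)
    then show ?thesis using that by (simp add: y'_def)
  qed
  have D6: "x = xr K i" if "x \<in> I" "i \<le> K" "\<phi>D x = \<tau> (K + K - i)" for x i
    using D4 that xrI[OF that(2)] D5[OF that(2)] by (metis inj_on_eq_iff)
  define h where "h (z::pt) = (if snd z \<ge> 0 then \<gamma> (\<phi>U (fst z)) else \<gamma> (\<phi>D (fst z)))" for z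
  have Ib: "x \<in> I \<longleftrightarrow> (1 - real K) / 2 \<le> x \<and> x \<le> (real K - 1) / 2" for x
    unfolding I_def Ieq by (rule atLeastAtMost_iff)
  have UkI: "Uk K = (\<lambda>x. (x, Pk K x)) ` I"
  proof
    show "Uk K \<subseteq> (\<lambda>x. (x, Pk K x)) ` I"
    proof
      fix z assume "z \<in> Uk K"
      then obtain x where "z = (x, Pk K x)" "(1 - real K) / 2 \<le> x \<and> x \<le> (real K - 1) / 2"
        unfolding Uk_def by blast
      then show "z \<in> (\<lambda>x. (x, Pk K x)) ` I" using Ib by blast
    qed
    show "(\<lambda>x. (x, Pk K x)) ` I \<subseteq> Uk K" unfolding Uk_def using Ib by blast
  qed
  have DkI: "Dk K = (\<lambda>x. (x, - Pk K x)) ` I"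
  proof
    show "Dk K \<subseteq> (\<lambda>x. (x, - Pk K x)) ` I"
    proof
      fix z assume "z \<in> Dk K"
      then obtain x where "z = (x, - Pk K x)" "(1 - real K) / 2 \<le> x \<and> x \<le> (real K - 1) / 2"
        unfolding Dk_def by blast
      then show "z \<in> (\<lambda>x. (x, - Pk K x)) ` I" using Ib by blast
    qed
    show "(\<lambda>x. (x, - Pk K x)) ` I \<subseteq> Dk K" unfolding Dk_def using Ib by blast
  qed
  have Pnn: "Pk K x \<ge> 0" if "x \<in> I" for x using Pk_nonneg that Ib by blast
  have HU: "h (x, Pk K x) = \<gamma> (\<phi>U x)" if "x \<in> I" for x using Pnn[OF that] by (simp add: h_def)
  have HD: "h (x, - Pk K x) = \<gamma> (\<phi>D x)" if x: "x \<in> I" for x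
  proof (cases "Pk K x = 0")
    case True
    then obtain j where j: "j \<le> K" "x = xr K j" using Pk_zero[OF K2] x Ib by blast
    have "h (x, - Pk K x) = \<gamma> (\<phi>U x)" using True by (simp add: h_def)
    also have "\<dots> = c j" using \<phi>U(3) j by simp
    also have "\<dots> = c (K+K-j)" using cm2[of j] j by simp
    also have "\<dots> = \<gamma> (\<phi>D x)" using D5[OF j(1)] j by simp
    finally show ?thesis .
  next
    case False
    then have "- Pk K x < 0" using Pnn[OF x] by simp
    then show ?thesis by (simp add: h_def)
  qed
  have contU: "continuous_on (Uk K) h"
  proof -
    have "continuous_on (Uk K) (\<lambda>z. \<phi>U (fst z))"
      by (rule continuous_on_compose2[OF \<phi>U(1)]) (auto intro: continuous_intros simp: UkI I_def)
    then have "continuous_on (Uk K) (\<lambda>z. \<gamma> (\<phi>U (fst z)))"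
      by (rule continuous_on_compose2[OF cont]) auto
    moreover have "\<And>z. z \<in> Uk K \<Longrightarrow> h z = \<gamma> (\<phi>U (fst z))" using HU by (auto simp: UkI)
    ultimately show ?thesis using continuous_on_cong by (metis (no_types, lifting))
  qed
  have contphiD: "continuous_on I \<phi>D"
    unfolding \<phi>D_def by (rule continuous_on_compose2[OF \<phi>D'(1)]) (use negI x'I in \<open>auto intro: continuous_intros\<close>)
  have contD: "continuous_on (Dk K) h"
  proof -
    have "continuous_on (Dk K) (\<lambda>z. \<phi>D (fst z))"
      by (rule continuous_on_compose2[OF contphiD]) (auto intro: continuous_intros simp: DkI)
    then have "continuous_on (Dk K) (\<lambda>z. \<gamma> (\<phi>D (fst z)))"
      by (rule continuous_on_compose2[OF cont]) auto
    moreover have "\<And>z. z \<in> Dk K \<Longrightarrow> h z = \<gamma> (\<phi>D (fst z))" using HD by (auto simp: DkI)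
    ultimately show ?thesis using continuous_on_cong by (metis (no_types, lifting))
  qed
  have cUk: "compact (Uk K)" unfolding UkI
    by (rule compact_continuous_image) (auto simp: I_def intro!: continuous_intros Pk_cont)
  have cDk: "compact (Dk K)" unfolding DkI
    by (rule compact_continuous_image) (auto simp: I_def intro!: continuous_intros Pk_cont)
  have compL: "compact (Lk K)" unfolding Lk_UD using cUk cDk by (rule compact_Un)
  have contL: "continuous_on (Lk K) h" unfolding Lk_UD
    by (rule continuous_on_closed_Un[OF compact_imp_closed[OF cUk] compact_imp_closed[OF cDk] contU contD])
  have hU: "h ` Uk K = \<gamma> ` {\<tau> 0..\<tau> K}"
  proof -
    have "h ` Uk K = (\<lambda>x. \<gamma> (\<phi>U x)) ` I" unfolding UkI using HU by (auto simp: image_iff)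
    also have "\<dots> = \<gamma> ` (\<phi>U ` I)" by auto
    finally show ?thesis using U2 by simp
  qed
  have hD: "h ` Dk K = \<gamma> ` {\<tau> K..\<tau> (K + K)}"
  proof -
    have "h ` Dk K = (\<lambda>x. \<gamma> (\<phi>D x)) ` I" unfolding DkI using HD by (auto simp: image_iff)
    also have "\<dots> = \<gamma> ` (\<phi>D ` I)" by auto
    finally show ?thesis using D2 by simp
  qed
  have ivl: "{\<tau> 0..\<tau> K} \<union> {\<tau> K..\<tau> (K + K)} = {\<tau> 0..\<tau> (K+K)}"
    using ordle'[of 0 K] ordle'[of K "K+K"] by auto
  have himg: "h ` Lk K = range \<gamma>"
    unfolding Lk_UD image_Un hU hD range_eq' image_Un[symmetric] ivl ..
  have hinj: "inj_on h (Lk K)"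
  proof (rule inj_onI)
    fix z1 z2 assume z: "z1 \<in> Lk K" "z2 \<in> Lk K" "h z1 = h z2"
    have UU: "z1 = z2" if "x1 \<in> I" "x2 \<in> I" "z1 = (x1, Pk K x1)" "z2 = (x2, Pk K x2)" for x1 x2
    proof -
      have "\<gamma> (\<phi>U x1) = \<gamma> (\<phi>U x2)" using z(3) that HU by simp
      then have "\<phi>U x1 = \<phi>U x2" using inj_onD[OF injX' _ U1[OF that(1)] U1[OF that(2)]] by blast
      then show ?thesis using U4 that by (simp add: inj_on_eq_iff)
    qed
    have DD: "z1 = z2" if "x1 \<in> I" "x2 \<in> I" "z1 = (x1, - Pk K x1)" "z2 = (x2, - Pk K x2)" for x1 x2
    proof -
      have "\<gamma> (\<phi>D x1) = \<gamma> (\<phi>D x2)" using z(3) that HD by simp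
      then have "\<phi>D x1 = \<phi>D x2" using inj_onD[OF injY' _ D1[OF that(1)] D1[OF that(2)]] by blast
      then show ?thesis using D4 that by (simp add: inj_on_eq_iff)
    qed
    have UD: "(x1, Pk K x1) = (x2, - Pk K x2)" if x12: "x1 \<in> I" "x2 \<in> I" "\<gamma> (\<phi>U x1) = \<gamma> (\<phi>D x2)" for x1 x2
    proof -
      let ?w = "\<gamma> (\<phi>U x1)"
      have "?w \<in> Splus f" using rS' U1[OF x12(1)] by auto
      moreover have "?w \<in> Sminus f" using rM' D1[OF x12(2)] x12(3) by auto
      ultimately have wS: "?w \<in> Sig f" by (auto simp: Splus_def Sminus_def Sig_def)
      obtain j where j: "j \<le> K" "\<phi>U x1 = \<tau> j" using stX[OF U1[OF x12(1)] wS] by blast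
      have wS2: "\<gamma> (\<phi>D x2) \<in> Sig f" using wS x12(3) by simp
      obtain i where i: "i \<le> K" "\<phi>D x2 = \<tau> (K+K-i)" using stY[OF D1[OF x12(2)] wS2] by blast
      have e1: "x1 = xr K j" by (rule U5[OF x12(1) j(1) j(2)])
      have e2: "x2 = xr K i" by (rule D6[OF x12(2) i(1) i(2)])
      have "c j = c (K+K-i)" using x12(3) j i by simp
      also have "\<dots> = c i" using cm2[OF i(1)] .
      finally have "j = i" using cinj' j i by blast
      then have "x1 = x2" using e1 e2 by simp
      moreover have "Pk K x1 = 0" using Pk_zero[OF K2] e1 j x12(1) Ib by blast
      ultimately show ?thesis by simp
    qed
    obtain x1 where x1: "x1 \<in> I" "z1 = (x1, Pk K x1) \<or> z1 = (x1, - Pk K x1)"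
      using z(1) unfolding Lk_UD UkI DkI by auto
    obtain x2 where x2: "x2 \<in> I" "z2 = (x2, Pk K x2) \<or> z2 = (x2, - Pk K x2)"
      using z(2) unfolding Lk_UD UkI DkI by auto
    show "z1 = z2"
      using x1 x2 UU DD UD[of x1 x2] UD[of x2 x1] z(3) HU HD by metis
  qed
  obtain g where hom: "homeomorphism (Lk K) (range \<gamma>) h g"
    using homeomorphism_compact[OF compL contL himg hinj] by blast
  note rSig' = rSig[unfolded K1]
  note reachX' = reachX[unfolded K1]
  note reachY' = reachY[unfolded KK K1]
  have hx: "h (xr K j, 0) = c j" if j: "j \<le> K" for j
  proof -
    have "Pk K (xr K j) = 0" using Pk_zero[OF K2 xr_range[OF K2 j]] j by blast
    then have "h (xr K j, 0) = h (xr K j, Pk K (xr K j))" by simp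
    also have "\<dots> = \<gamma> (\<phi>U (xr K j))" by (rule HU[OF xrI[OF j]])
    also have "\<dots> = c j" using \<phi>U(3) j by simp
    finally show ?thesis .
  qed
  have hSig: "h ` (Lk K \<inter> Sig snd) = range \<gamma> \<inter> Sig f"
  proof -
    have "h ` (Lk K \<inter> Sig snd) = (\<lambda>j. h (xr K j, 0)) ` {0..K}"
      unfolding Lk_Sig[OF K2] image_image ..
    also have "\<dots> = (\<lambda>j. c j) ` {0..K}" by (rule image_cong) (use hx in auto)
    finally show ?thesis using rSig' by simp
  qed
  have RX: "reach (Xk K) (Uk K) p q \<longleftrightarrow> reach X (range \<gamma> \<inter> Splus f) (h p) (h q)"
    if pq: "p \<in> Uk K" "q \<in> Uk K" for p q
  proof -
    obtain x1 where x1: "x1 \<in> I" "p = (x1, Pk K x1)" using pq(1) unfolding UkI by auto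
    obtain x2 where x2: "x2 \<in> I" "q = (x2, Pk K x2)" using pq(2) unfolding UkI by auto
    have "reach (Xk K) (Uk K) p q \<longleftrightarrow> x1 \<le> x2"
      using model_reach_X[of K x1 x2] x1 x2 Ib by blast
    also have "\<dots> \<longleftrightarrow> \<phi>U x1 \<le> \<phi>U x2" by (rule U3[OF x1(1) x2(1)])
    also have "\<dots> \<longleftrightarrow> reach X (range \<gamma> \<inter> Splus f) (\<gamma> (\<phi>U x1)) (\<gamma> (\<phi>U x2))"
      using reachX'[OF U1[OF x1(1)] U1[OF x2(1)]] by simp
    finally show ?thesis using HU x1 x2 by simp
  qed
  have RY: "reach (Yk K) (Dk K) p q \<longleftrightarrow> reach Y (range \<gamma> \<inter> Sminus f) (h p) (h q)"
    if pq: "p \<in> Dk K" "q \<in> Dk K" for p q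
  proof -
    obtain x1 where x1: "x1 \<in> I" "p = (x1, - Pk K x1)" using pq(1) unfolding DkI by auto
    obtain x2 where x2: "x2 \<in> I" "q = (x2, - Pk K x2)" using pq(2) unfolding DkI by auto
    have "reach (Yk K) (Dk K) p q \<longleftrightarrow> x2 \<le> x1"
      using model_reach_Y[of K x1 x2] x1 x2 Ib by blast
    also have "\<dots> \<longleftrightarrow> \<phi>D x1 \<le> \<phi>D x2" by (rule D3[OF x1(1) x2(1)])
    also have "\<dots> \<longleftrightarrow> reach Y (range \<gamma> \<inter> Sminus f) (\<gamma> (\<phi>D x1)) (\<gamma> (\<phi>D x2))"
      using reachY'[OF D1[OF x1(1)] D1[OF x2(1)]] by simp
    finally show ?thesis using HD x1 x2 by simp
  qed
  have se: "sigma_equiv (Xk K) (Yk K) snd (Lk K) X Y f (range \<gamma>)"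
    unfolding sigma_equiv_def
  proof (rule exI[of _ h], rule exI[of _ g], intro conjI)
    show "homeomorphism (Lk K) (range \<gamma>) h g" by (rule hom)
    show "h ` (Lk K \<inter> Sig snd) = range \<gamma> \<inter> Sig f" by (rule hSig)
    show "h ` (Lk K \<inter> Splus snd) = range \<gamma> \<inter> Splus f" unfolding Lk_Splus rS' hU ..
    show "h ` (Lk K \<inter> Sminus snd) = range \<gamma> \<inter> Sminus f" unfolding Lk_Sminus rM' hD ..
    show "h ` (Lk K \<inter> slide_esc (Xk K) (Yk K) snd) = range \<gamma> \<inter> slide_esc X Y f"
      unfolding model_slide_empty rSlide by simp
    show "\<forall>p\<in>Lk K \<inter> Splus snd. \<forall>q\<in>Lk K \<inter> Splus snd.
        reach (Xk K) (Lk K \<inter> Splus snd) p q \<longleftrightarrow> reach X (range \<gamma> \<inter> Splus f) (h p) (h q)"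
      unfolding Lk_Splus using RX by blast
    show "\<forall>p\<in>Lk K \<inter> Sminus snd. \<forall>q\<in>Lk K \<inter> Sminus snd.
        reach (Yk K) (Lk K \<inter> Sminus snd) p q \<longleftrightarrow> reach Y (range \<gamma> \<inter> Sminus f) (h p) (h q)"
      unfolding Lk_Sminus using RY by blast
    show "\<forall>p\<in>Lk K \<inter> slide_esc (Xk K) (Yk K) snd. \<forall>q\<in>Lk K \<inter> slide_esc (Xk K) (Yk K) snd.
        reach (ZT (Xk K) (Yk K) snd) (Lk K \<inter> slide_esc (Xk K) (Yk K) snd) p q \<longleftrightarrow>
        reach (ZT X Y f) (range \<gamma> \<inter> slide_esc X Y f) (h p) (h q)"
      unfolding model_slide_empty by simp
  qed
  then show ?thesis unfolding K_def .
qed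

end


theorem theoremB:
  fixes k :: nat
    and X' Y' :: "real \<times> real \<Rightarrow> real \<times> real"
    and f' :: "real \<times> real \<Rightarrow> real"
    and \<gamma> :: "real \<Rightarrow> real \<times> real"
    and p :: "nat \<Rightarrow> real \<times> real"
  assumes "k \<ge> 3"
    and "PSVF X' Y' f'"
    and "homoclinic_loop X' Y' f' (k - 1) \<gamma> p"
  shows "sigma_equiv (Xk k) (Yk k) snd (Lk k) X' Y' f' (range \<gamma>)"
proof -
  have sm: "smooth X'" "smooth Y'" "smooth f'" using assms(2) unfolding PSVF_def by auto
  have n2: "k - 1 \<ge> 2" using assms(1) by simp
  have kk: "k - 1 + 1 = k" using assms(1) by simp
  have H: "global_traj X' Y' f' \<gamma>" "inj_on p {1..k-1}" "\<forall>i\<in>{1..k-1}. vv_twofold X' Y' f' (p i)"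
    "\<exists>T>0. (\<forall>t. \<gamma> (t + T) = \<gamma> t) \<and>
       (\<exists>\<tau>::nat \<Rightarrow> real.
          (\<forall>j\<le>2*(k-1)+1. \<tau> j < \<tau> (Suc j)) \<and> \<tau> (2*(k-1)+2) = \<tau> 0 + T \<and>
          (\<forall>j\<le>2*(k-1)+1. \<gamma> (\<tau> j) \<in> Sig f') \<and>
          (\<forall>j\<le>2*(k-1)+1. \<forall>s. \<tau> j < s \<and> s < \<tau> (Suc j) \<longrightarrow> \<gamma> s \<notin> Sig f') \<and>
          crossing X' Y' f' (\<gamma> (\<tau> 0)) \<and> crossing X' Y' f' (\<gamma> (\<tau> ((k-1)+1))) \<and>
          (\<forall>i\<in>{1..k-1}. \<gamma> (\<tau> i) = p i \<and> \<gamma> (\<tau> ((k-1)+1+i)) = p ((k-1)+1-i)))"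
    using assms(3) unfolding homoclinic_loop_def by auto
  obtain T \<tau> where T: "T > 0" "\<forall>t. \<gamma> (t + T) = \<gamma> t"
    and \<tau>: "\<forall>j\<le>2*(k-1)+1. \<tau> j < \<tau> (Suc j)" "\<tau> (2*(k-1)+2) = \<tau> 0 + T"
          "\<forall>j\<le>2*(k-1)+1. \<gamma> (\<tau> j) \<in> Sig f'"
          "\<forall>j\<le>2*(k-1)+1. \<forall>s. \<tau> j < s \<and> s < \<tau> (Suc j) \<longrightarrow> \<gamma> s \<notin> Sig f'"
          "crossing X' Y' f' (\<gamma> (\<tau> 0))" "crossing X' Y' f' (\<gamma> (\<tau> ((k-1)+1)))"
          "\<forall>i\<in>{1..k-1}. \<gamma> (\<tau> i) = p i \<and> \<gamma> (\<tau> ((k-1)+1+i)) = p ((k-1)+1-i)"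
    using H(4) by blast
  have LD: "loopdata X' Y' f' \<gamma> T \<tau> (k-1) p"
    by (unfold_locales) (use sm n2 H(1-3) T \<tau> in auto)
  interpret L: loopdata X' Y' f' \<gamma> T \<tau> "k-1" p by (rule LD)
  have "sigma_equiv (Xk (k-1+1)) (Yk (k-1+1)) snd (Lk (k-1+1)) X' Y' f' (range \<gamma>)"
  proof (cases "L.sg 0")
    case True
    have "loopX X' Y' f' \<gamma> T \<tau> (k-1) p"
      by (rule loopX.intro[OF LD]) (unfold_locales, rule True)
    then show ?thesis by (rule loopX.main)
  next
    case False
    have s: "L.sg (k-1+1)" using L.sign_pattern[of "k-1+1"] False by simp
    have LD': "loopdata X' Y' f' \<gamma> T L.\<tau>' (k-1) L.p'" by (rule L.reindex)
    have "loopX X' Y' f' \<gamma> T L.\<tau>' (k-1) L.p'"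
      by (rule loopX.intro[OF LD']) (unfold_locales, use L.reindex_sg s in simp)
    then show ?thesis by (rule loopX.main)
  qed
  then show ?thesis unfolding kk .
qed


end
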